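(* Let $f^\circ=\mathbb 1_{[0,1)}$, $R>0$, $n\in\mathbb N$, $\alpha\in(0,1)$, $\delta\in(0,1]$, and let $\mathcal A$ be a set of strictly positive, non-increasing sequences bounded by $1$. Suppose there are $N\in\mathbb N$ and $a^1,\dots,a^N\in\mathcal A$ such that, writing $k^m:=k_{a^m}(\delta n)$ and $\rho^m:=\rho_{a^m}(\delta n)$ for $m\in[N]$: (C1) $k^m\le k^l$ and $\rho^m\le\delta\rho^l$ whenever $m<l$, $l,m\in[N]$; (C2) there is a finite constant $c_\alpha>0$ with $\exp(c_\alpha\delta^{-2})\le N\alpha^2$; (C3) there is a finite constant $L>0$ with $2\max_{m\in[N]}\sum_{j\in\mathbb N}(a^m_j)^2\le L$; (C4) there is $\eta\in(0,1]$ with $\eta\le\min_{m\in[N]}\frac{(a^m_{k^m})^2\wedge(\delta n)^{-1}\nu_{k^m}^2}{(a^m_{k^m})^2\vee(\delta n)^{-1}\nu_{k^m}^2}$. Let $\underline A_\alpha^2:=\eta\big(R^2\wedge\sqrt{\log(1+\alpha^2)}\wedge L^{-1}\wedge\sqrt{c_\alpha}\big)$. Then for all $A\in[0,\underline A_\alpha]$, $$\inf_\Delta\sup_{a\in\mathcal A}\mathcal R\big(\Delta\mid\mathcal E_a^R,A\rho_a(\delta n)\big)\ge1-\alpha,$$ where the infimum is over all tests $\Delta$.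
   Context: Identify the circle with $[0,1)$. $L^2:=L^2([0,1))$ is the space of square-integrable complex-valued functions on $[0,1)$ with $\langle h_1,h_2\rangle=\int_0^1h_1\overline{h_2}$ and norm $\|\cdot\|_{L^2}$. $e_j(x):=\exp(-\mathrm i2\pi jx)$, $h_j:=\langle h,e_j\rangle$ for $j\in\mathbb Z$. $\mathcal D$ is the set of real-valued probability densities on $[0,1)$ in $L^2$. Circular convolution $(f\circledast\varphi)(y)=\int_0^1f(y-s-\lfloor y-s\rfloor)\varphi(s)ds$. The error density $\varphi\in\mathcal D$ is fixed with $|\varphi_j|>0$ for all $j\in\mathbb Z$. For $f\in\mathcal D$, $Y_1,\dots,Y_n$ are i.i.d. with density $f\circledast\varphi$, joint law $\mathbb P_f$; a test is a measurable $\{0,1\}$-valued function of $(Y_1,\dots,Y_n)$. $[k]:=\{1,\dots,k\}$, $\nu_k:=(\sum_{j\in\mathbb Z:|j|\in[k]}|\varphi_j|^{-4})^{1/4}$. For a sequence $a$ and $x>0$: $\rho_a(x):=\big(\min_{k\in\mathbb N}(a_k^2\vee\nu_k^2/x)\big)^{1/2}$ and $k_a(x):=\min\{k\in\mathbb N:a_k^2\vee\nu_k^2/x=\rho_a(x)^2\}$. $\mathcal E_a^R:=\{h\in L^2:2\sum_{j\in\mathbb N}a_j^{-2}|h_j|^2\le R^2\}$. Risk: $\mathcal R(\Delta\mid\mathcal E,\rho):=\mathbb P_{f^\circ}(\Delta=1)+\sup\{\mathbb P_f(\Delta=0):f\in\mathcal D,f-f^\circ\in\mathcal E,\|f-f^\circ\|_{L^2}\ge\rho\}$.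 *)

theory Defs
  imports "HOL-Probability.Probability"
begin

text \<open>The circle is identified with [0,1); Lebesgue (Borel) measure on [0,1).\<close>
definition M0 :: "real measure" where
  "M0 = restrict_space lborel {0..<1}"

definition ebase :: "int \<Rightarrow> real \<Rightarrow> complex" where
  "ebase j x = exp (- (\<i> * of_real (2 * pi * of_int j * x)))"

definition fc :: "(real \<Rightarrow> complex) \<Rightarrow> int \<Rightarrow> complex" where
  "fc h j = integral\<^sup>L M0 (\<lambda>x. h x * cnj (ebase j x))"

definition L2 :: "(real \<Rightarrow> complex) set" where
  "L2 = {h. h \<in> borel_measurable M0 \<and> integrable M0 (\<lambda>x. (cmod (h x))\<^sup>2)}"

definition l2norm :: "(real \<Rightarrow> complex) \<Rightarrow> real" where
  "l2norm h = sqrt (integral\<^sup>L M0 (\<lambda>x. (cmod (h x))\<^sup>2))"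

definition Dens :: "(real \<Rightarrow> real) set" where
  "Dens = {f. f \<in> borel_measurable M0 \<and> (\<forall>x\<in>{0..<1}. 0 \<le> f x) \<and>
              integrable M0 f \<and> integral\<^sup>L M0 f = 1 \<and>
              (\<lambda>x. complex_of_real (f x)) \<in> L2}"

definition cconv :: "(real \<Rightarrow> real) \<Rightarrow> (real \<Rightarrow> real) \<Rightarrow> real \<Rightarrow> real" where
  "cconv f \<phi> y = integral\<^sup>L M0 (\<lambda>s. f (y - s - of_int \<lfloor>y - s\<rfloor>) * \<phi> s)"

definition Pf :: "(real \<Rightarrow> real) \<Rightarrow> nat \<Rightarrow> (real \<Rightarrow> real) \<Rightarrow> (nat \<Rightarrow> real) measure" where
  "Pf \<phi> n f = PiM {0..<n} (\<lambda>_. density M0 (\<lambda>y. ennreal (cconv f \<phi> y)))"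

definition tests :: "nat \<Rightarrow> ((nat \<Rightarrow> real) \<Rightarrow> nat) set" where
  "tests n = {\<Delta>. \<Delta> \<in> measurable (PiM {0..<n} (\<lambda>_. M0)) (count_space UNIV) \<and>
                  (\<forall>y. \<Delta> y \<in> {0, 1})}"

definition nu :: "(real \<Rightarrow> real) \<Rightarrow> nat \<Rightarrow> real" where
  "nu \<phi> k = (\<Sum>j\<in>{j::int. 1 \<le> \<bar>j\<bar> \<and> \<bar>j\<bar> \<le> int k}.
               (cmod (fc (\<lambda>x. complex_of_real (\<phi> x)) j)) powr (-4)) powr (1/4)"

definition rho :: "(real \<Rightarrow> real) \<Rightarrow> (nat \<Rightarrow> real) \<Rightarrow> real \<Rightarrow> real" where
  "rho \<phi> a x = sqrt (INF k\<in>{1..}. max ((a k)\<^sup>2) ((nu \<phi> k)\<^sup>2 / x))"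

definition kk :: "(real \<Rightarrow> real) \<Rightarrow> (nat \<Rightarrow> real) \<Rightarrow> real \<Rightarrow> nat" where
  "kk \<phi> a x = (LEAST k. 1 \<le> k \<and> max ((a k)\<^sup>2) ((nu \<phi> k)\<^sup>2 / x) = (rho \<phi> a x)\<^sup>2)"

definition ellipsoid :: "(nat \<Rightarrow> real) \<Rightarrow> real \<Rightarrow> (real \<Rightarrow> complex) set" where
  "ellipsoid a R = {h \<in> L2. \<exists>s. ((\<lambda>j. inverse ((a j)\<^sup>2) * (cmod (fc h (int j)))\<^sup>2) has_sum s) {1..}
                              \<and> 2 * s \<le> R\<^sup>2}"

definition fcirc :: "real \<Rightarrow> real" where
  "fcirc = indicator {0..<1}"

text \<open>Risk; the supremum over an empty family is taken to be 0.\<close>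
definition risk :: "(real \<Rightarrow> real) \<Rightarrow> nat \<Rightarrow> ((nat \<Rightarrow> real) \<Rightarrow> nat) \<Rightarrow> (real \<Rightarrow> complex) set \<Rightarrow> real \<Rightarrow> real" where
  "risk \<phi> n \<Delta> E \<rho> =
     measure (Pf \<phi> n fcirc) {y \<in> space (Pf \<phi> n fcirc). \<Delta> y = 1}
     + Sup (insert 0 {measure (Pf \<phi> n f) {y \<in> space (Pf \<phi> n f). \<Delta> y = 0} | f.
            f \<in> Dens \<and> (\<lambda>x. complex_of_real (f x - fcirc x)) \<in> E \<and>
            l2norm (\<lambda>x. complex_of_real (f x - fcirc x)) \<ge> \<rho>})"

end

theory Submission
  imports Defs
begin

lemma space_M0[simp]: "space M0 = {0..<1}"
  by (simp add: M0_def space_restrict_space)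


lemma prob_M0: "prob_space M0"
  unfolding M0_def by (rule prob_space_restrict_space) auto

lemma M0_integral_cont:
  fixes f :: "real \<Rightarrow> 'b::euclidean_space"
  assumes "continuous_on {0..1} f"
  shows "integrable M0 f" "integral\<^sup>L M0 f = integral {0..1} f"
proof -
  have i1: "integrable lborel (\<lambda>x. indicator {0..1} x *\<^sub>R f x)"
    by (rule borel_integrable_compact) (use assms in auto)
  have si: "set_integrable lborel {0..<1} f"
    by (rule set_integrable_subset[of _ "{0..1}"]) (use i1 in \<open>auto simp: set_integrable_def\<close>)
  show "integrable M0 f" unfolding M0_def
    by (subst integrable_restrict_space) (use si in \<open>auto simp: set_integrable_def\<close>)
  have "integral\<^sup>L M0 f = (LINT x : {0..<1} | lborel. f x)"
    unfolding M0_def set_lebesgue_integral_def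
    by (subst integral_restrict_space) auto
  also have "\<dots> = integral {0..<1} f"
    by (rule set_borel_integral_eq_integral(2)[OF si])
  also have "\<dots> = integral {0..1} f"
  proof -
    have "negligible {1::real}" by simp
    then show ?thesis
      by (intro integral_subset_negligible) (auto intro: negligible_subset[OF \<open>negligible {1::real}\<close>])
  qed
  finally show "integral\<^sup>L M0 f = integral {0..1} f" .
qed

definition Ee :: "int \<Rightarrow> real \<Rightarrow> complex" where
  "Ee m x = cis (2 * pi * of_int m * x)"

lemma Ee_cont[continuous_intros]: "continuous_on S (Ee m)"
  unfolding Ee_def by (intro continuous_intros)

lemma Ee_meas[measurable]: "Ee m \<in> borel_measurable borel"
  by (intro borel_measurable_continuous_onI Ee_cont)

lemma Ee_mult: "Ee a x * Ee b x = Ee (a + b) x"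
  unfolding Ee_def by (simp add: cis_mult distrib_left distrib_right)

lemma Ee_cnj: "cnj (Ee m x) = Ee (- m) x"
  unfolding Ee_def by (simp add: cis_cnj)

lemma Ee_0[simp]: "Ee 0 x = 1"
  unfolding Ee_def by simp

lemma Ee_norm[simp]: "cmod (Ee m x) = 1"
  unfolding Ee_def by simp

lemma Ee_shift_int: "Ee m (x + of_int z) = Ee m x"
proof -
  have "Ee m (x + of_int z) = Ee m x * cis (2 * pi * of_int (m * z))"
    unfolding Ee_def by (simp add: cis_mult algebra_simps)
  also have "cis (2 * pi * of_int (m * z)) = 1"
    by (metis cis_multiple_2pi mult.commute Ints_of_int)
  finally show ?thesis by simp
qed

lemma Ee_diff: "Ee m (x - y) = Ee m x * Ee (- m) y"
  unfolding Ee_def by (simp add: cis_mult algebra_simps)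

lemma ebase_Ex: "ebase j x = Ee (- j) x"
  unfolding ebase_def Ee_def by (simp add: cis_conv_exp algebra_simps)

lemma cnj_ebase: "cnj (ebase j x) = Ee j x"
  by (simp add: ebase_Ex Ee_cnj)

lemma Ee_has_integral:
  assumes "m \<noteq> 0"
  shows "(Ee m has_integral 0) {0..1}"
proof -
  define c where "c = 2 * pi * of_int m"
  have c0: "c \<noteq> 0" using assms by (simp add: c_def)
  define F where "F x = Ee m x / (\<i> * of_real c)" for x
  have Ee_eq: "Ee m x = exp (\<i> * of_real c * of_real x)" for x
    unfolding Ee_def c_def by (simp add: cis_conv_exp mult_ac)
  have d: "((\<lambda>z. exp (\<i> * of_real c * z) / (\<i> * of_real c)) has_field_derivative
            exp (\<i> * of_real c * of_real x)) (at (of_real x))" for x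
  proof -
    have "((\<lambda>z. exp (\<i> * of_real c * z) / (\<i> * of_real c)) has_field_derivative
            (exp (\<i> * of_real c * of_real x) * (\<i> * of_real c)) / (\<i> * of_real c)) (at (of_real x))"
      by (auto intro!: derivative_eq_intros)
    then show ?thesis using c0 by simp
  qed
  have "(F has_vector_derivative Ee m x) (at x)" for x
    using has_vector_derivative_real_field[OF d[of x]] unfolding F_def Ee_eq by simp
  then have "(Ee m has_integral (F 1 - F 0)) {0..1}"
    by (intro fundamental_theorem_of_calculus) (auto intro: has_vector_derivative_at_within)
  moreover have "F 1 = F 0"
    using Ee_shift_int[of m 0 1] unfolding F_def by simp
  ultimately show ?thesis by simp
qed

lemma Ee_integral_M0: "integral\<^sup>L M0 (Ee m) = (if m = 0 then 1 else 0)"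
proof -
  have "integral\<^sup>L M0 (Ee m) = integral {0..1} (Ee m)"
    by (rule M0_integral_cont) (intro continuous_intros)
  also have "\<dots> = (if m = 0 then 1 else 0)"
  proof (cases "m = 0")
    case True
    have "Ee 0 = (\<lambda>_. 1)" by (rule ext) simp
    then show ?thesis using True by simp
  qed (use Ee_has_integral[of m] in \<open>auto intro: integral_unique\<close>)
  finally show ?thesis .
qed

lemma Ee_integrable_M0[simp]: "integrable M0 (Ee m)"
  by (rule M0_integral_cont) (intro continuous_intros)

definition JJ :: "nat \<Rightarrow> int set" where
  "JJ k = {j::int. 1 \<le> \<bar>j\<bar> \<and> \<bar>j\<bar> \<le> int k}"

lemma JJ_finite[simp]: "finite (JJ k)"
proof -
  have "JJ k \<subseteq> {- int k..int k}" unfolding JJ_def by auto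
  then show ?thesis by (rule finite_subset) simp
qed

lemma JJ_0[simp]: "0 \<notin> JJ k" unfolding JJ_def by simp

lemma JJ_uminus[simp]: "- j \<in> JJ k \<longleftrightarrow> j \<in> JJ k" unfolding JJ_def by simp

lemma JJ_inter: "JJ k \<inter> JJ k' = JJ (min k k')" unfolding JJ_def by auto

lemma JJ_mono: "k \<le> k' \<Longrightarrow> JJ k \<subseteq> JJ k'" unfolding JJ_def by auto

lemma sum_JJ_neg: "(\<Sum>j\<in>JJ k. f (- j)) = (\<Sum>j\<in>JJ k. f j)"
  by (rule sum.reindex_bij_witness[of _ uminus uminus]) auto

lemma sum_JJ_pair:
  fixes f :: "int \<Rightarrow> 'a::comm_monoid_add"
  assumes sym: "\<And>j. f (- j) = f j"
  shows "(\<Sum>j\<in>JJ k. f j) = (\<Sum>i\<in>{1..k}. f (int i)) + (\<Sum>i\<in>{1..k}. f (int i))"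
proof -
  have eq: "JJ k = int ` {1..k} \<union> (\<lambda>i. - int i) ` {1..k}"
  proof
    show "JJ k \<subseteq> int ` {1..k} \<union> (\<lambda>i. - int i) ` {1..k}"
    proof
      fix j assume j: "j \<in> JJ k"
      show "j \<in> int ` {1..k} \<union> (\<lambda>i. - int i) ` {1..k}"
      proof (cases "j > 0")
        case True
        then have "j = int (nat j)" "nat j \<in> {1..k}" using j unfolding JJ_def by auto
        then show ?thesis by blast
      next
        case False
        then have "j = - int (nat (- j))" "nat (- j) \<in> {1..k}" using j unfolding JJ_def by auto
        then show ?thesis by blast
      qed
    qed
  qed (auto simp: JJ_def)
  have "(\<Sum>j\<in>JJ k. f j) = (\<Sum>j\<in>int ` {1..k}. f j) + (\<Sum>j\<in>(\<lambda>i. - int i) ` {1..k}. f j)"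
    unfolding eq by (rule sum.union_disjoint) auto
  also have "(\<Sum>j\<in>int ` {1..k}. f j) = (\<Sum>i\<in>{1..k}. f (int i))"
    by (simp add: sum.reindex inj_on_def)
  also have "(\<Sum>j\<in>(\<lambda>i. - int i) ` {1..k}. f j) = (\<Sum>i\<in>{1..k}. f (- int i))"
    by (simp add: sum.reindex inj_on_def)
  also have "\<dots> = (\<Sum>i\<in>{1..k}. f (int i))" using sym by simp
  finally show ?thesis .
qed

definition tpc :: "(int \<Rightarrow> complex) \<Rightarrow> nat \<Rightarrow> real \<Rightarrow> complex" where
  "tpc a k x = (\<Sum>j\<in>JJ k. a j * Ee j x)"

lemma tpc_cont[continuous_intros]: "continuous_on S (tpc a k)"
  unfolding tpc_def by (intro continuous_intros)

lemma tpc_meas[measurable]: "tpc a k \<in> borel_measurable borel"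
  by (intro borel_measurable_continuous_onI tpc_cont)

lemma tpc_shift_int: "tpc a k (x + of_int z) = tpc a k x"
  unfolding tpc_def by (simp add: Ee_shift_int)

lemma tpc_integrable[simp]: "integrable M0 (tpc a k)"
  by (rule M0_integral_cont) (intro continuous_intros)

lemma integrable_M0_cont: "continuous_on {0..1} (f :: real \<Rightarrow> complex) \<Longrightarrow> integrable M0 f"
  by (rule M0_integral_cont)

lemma tpc_integral: "integral\<^sup>L M0 (tpc a k) = 0"
  unfolding tpc_def
  by (subst Bochner_Integration.integral_sum) (auto simp: Ee_integral_M0 integral_mult_right_zero intro!: sum.neutral)

lemma tpc_Ee: "integral\<^sup>L M0 (\<lambda>x. tpc a k x * Ee m x) = (if - m \<in> JJ k then a (- m) else 0)"
proof -
  have "integral\<^sup>L M0 (\<lambda>x. tpc a k x * Ee m x) = integral\<^sup>L M0 (\<lambda>x. \<Sum>j\<in>JJ k. a j * Ee (j + m) x)"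
    unfolding tpc_def by (simp add: sum_distrib_right mult.assoc Ee_mult)
  also have "\<dots> = (\<Sum>j\<in>JJ k. a j * integral\<^sup>L M0 (Ee (j + m)))"
    by (subst Bochner_Integration.integral_sum) (auto simp: integral_mult_right_zero)
  also have "\<dots> = (\<Sum>j\<in>JJ k. if j = - m then a j else 0)"
    by (intro sum.cong) (auto simp: Ee_integral_M0)
  also have "\<dots> = (if - m \<in> JJ k then a (- m) else 0)"
    by (simp add: sum.delta')
  finally show ?thesis .
qed

lemma tpc_inner:
  "integral\<^sup>L M0 (\<lambda>x. tpc a k x * cnj (tpc b k' x)) = (\<Sum>j\<in>JJ (min k k'). a j * cnj (b j))"
proof -
  have "integral\<^sup>L M0 (\<lambda>x. tpc a k x * cnj (tpc b k' x)) =
        integral\<^sup>L M0 (\<lambda>x. \<Sum>j'\<in>JJ k'. cnj (b j') * (tpc a k x * Ee (- j') x))"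
    unfolding tpc_def[of b]
    by (simp add: sum_distrib_left Ee_cnj mult_ac)
  also have "\<dots> = (\<Sum>j'\<in>JJ k'. cnj (b j') * integral\<^sup>L M0 (\<lambda>x. tpc a k x * Ee (- j') x))"
    by (subst Bochner_Integration.integral_sum) (auto simp: integral_mult_right_zero intro!: integrable_M0_cont continuous_intros)
  also have "\<dots> = (\<Sum>j'\<in>JJ k'. if j' \<in> JJ k then cnj (b j') * a j' else 0)"
    by (intro sum.cong) (auto simp: tpc_Ee)
  also have "\<dots> = (\<Sum>j\<in>JJ k' \<inter> JJ k. a j * cnj (b j))"
    by (simp add: sum.inter_restrict mult.commute cong: if_cong)
  also have "JJ k' \<inter> JJ k = JJ (min k k')" by (simp add: JJ_inter min.commute)
  finally show ?thesis .
qed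

lemma tpc_real:
  assumes "\<And>j. a (- j) = cnj (a j)"
  shows "tpc a k x = of_real (Re (tpc a k x))"
proof -
  have "cnj (tpc a k x) = (\<Sum>j\<in>JJ k. a (- j) * Ee (- j) x)"
    unfolding tpc_def by (simp add: assms Ee_cnj)
  also have "\<dots> = tpc a k x" unfolding tpc_def by (rule sum_JJ_neg)
  finally have "cnj (tpc a k x) = tpc a k x" .
  then have "tpc a k x \<in> \<real>" using Reals_cnj_iff by blast
  then show ?thesis by (simp add: complex_is_Real_iff)
qed

lemma meas_M0: "f \<in> borel_measurable borel \<Longrightarrow> f \<in> borel_measurable M0"
  unfolding M0_def by (rule measurable_restrict_space1) simp

lemma Ee_meas_M0[measurable]: "Ee m \<in> borel_measurable M0"
  by (rule meas_M0) simp

lemma of_real_integral: "complex_of_real (integral\<^sup>L M g) = integral\<^sup>L M (\<lambda>x. complex_of_real (g x))"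
  by (rule integral_complex_of_real[symmetric])

lemma fc_real_eq: "fc (\<lambda>x. complex_of_real (\<phi> x)) j = integral\<^sup>L M0 (\<lambda>x. of_real (\<phi> x) * Ee j x)"
  unfolding fc_def by (simp add: cnj_ebase)

lemma fc_neg: "fc (\<lambda>x. complex_of_real (\<phi> x)) (- j) = cnj (fc (\<lambda>x. complex_of_real (\<phi> x)) j)"
  unfolding fc_real_eq by (subst Bochner_Integration.integral_cnj[symmetric]) (simp add: Ee_cnj)

lemma Dens_integrable_Ee:
  assumes "\<phi> \<in> Dens"
  shows "integrable M0 (\<lambda>x. of_real (\<phi> x) * Ee m x)"
proof -
  have m: "\<phi> \<in> borel_measurable M0" "integrable M0 \<phi>" using assms by (auto simp: Dens_def)
  have i: "integrable M0 (\<lambda>x. complex_of_real (\<phi> x))" using m(2) by simp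
  show ?thesis
    by (rule Bochner_Integration.integrable_bound[OF i]) (use m in \<open>auto simp: norm_mult\<close>)
qed

lemma Dens_fc_le1:
  assumes "\<phi> \<in> Dens"
  shows "cmod (fc (\<lambda>x. complex_of_real (\<phi> x)) j) \<le> 1"
proof -
  have m: "\<phi> \<in> borel_measurable M0" "integrable M0 \<phi>" "integral\<^sup>L M0 \<phi> = 1"
    "\<And>x. x \<in> space M0 \<Longrightarrow> 0 \<le> \<phi> x" using assms by (auto simp: Dens_def)
  have "cmod (fc (\<lambda>x. complex_of_real (\<phi> x)) j) \<le> integral\<^sup>L M0 (\<lambda>x. norm (of_real (\<phi> x) * Ee j x))"
    unfolding fc_real_eq by (rule integral_norm_bound)
  also have "\<dots> = integral\<^sup>L M0 \<phi>"
    by (intro Bochner_Integration.integral_cong) (use m(4) in \<open>auto simp: norm_mult\<close>)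
  finally show ?thesis using m(3) by simp
qed

lemma frac_in: "(y::real) - s - of_int \<lfloor>y - s\<rfloor> \<in> {0..<1}"
  by (auto simp: floor_le_iff) linarith

lemma cconv_fcirc:
  assumes "\<phi> \<in> Dens"
  shows "cconv fcirc \<phi> y = 1"
proof -
  have "cconv fcirc \<phi> y = integral\<^sup>L M0 \<phi>"
    unfolding cconv_def fcirc_def
    by (intro Bochner_Integration.integral_cong) (use frac_in[of y] in auto)
  then show ?thesis using assms by (simp add: Dens_def)
qed

lemma cconv_tpc:
  assumes phi: "\<phi> \<in> Dens"
    and sym: "\<And>j. a (- j) = cnj (a j)"
    and f: "\<And>x. f x = 1 + Re (tpc a k x)"
  shows "complex_of_real (cconv f \<phi> y) =
    1 + tpc (\<lambda>j. a j * fc (\<lambda>x. complex_of_real (\<phi> x)) (- j)) k y"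
proof -
  have m: "\<phi> \<in> borel_measurable M0" "integrable M0 \<phi>" "integral\<^sup>L M0 \<phi> = 1"
    using phi by (auto simp: Dens_def)
  have fc_eq: "f z = 1 + tpc a k z" for z
    using tpc_real[where a=a, OF sym, of k z] by (simp add: f)
  have "complex_of_real (cconv f \<phi> y) =
      integral\<^sup>L M0 (\<lambda>s. complex_of_real (f (y - s - of_int \<lfloor>y - s\<rfloor>)) * of_real (\<phi> s))"
    unfolding cconv_def of_real_integral by simp
  also have "\<dots> = integral\<^sup>L M0 (\<lambda>s. of_real (\<phi> s) +
       (\<Sum>j\<in>JJ k. (a j * Ee j y) * (of_real (\<phi> s) * Ee (- j) s)))"
  proof (intro Bochner_Integration.integral_cong refl)
    fix s
    have "complex_of_real (f (y - s - of_int \<lfloor>y - s\<rfloor>)) = 1 + tpc a k (y - s)"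
      using tpc_shift_int[of a k "y - s" "- \<lfloor>y - s\<rfloor>"] by (simp add: fc_eq)
    also have "tpc a k (y - s) = (\<Sum>j\<in>JJ k. a j * Ee j y * Ee (- j) s)"
      unfolding tpc_def by (simp add: Ee_diff mult.assoc)
    finally show "complex_of_real (f (y - s - of_int \<lfloor>y - s\<rfloor>)) * of_real (\<phi> s) =
       of_real (\<phi> s) + (\<Sum>j\<in>JJ k. (a j * Ee j y) * (of_real (\<phi> s) * Ee (- j) s))"
      by (simp add: distrib_left sum_distrib_left mult_ac)
  qed
  also have "\<dots> = integral\<^sup>L M0 (\<lambda>s. complex_of_real (\<phi> s)) +
       (\<Sum>j\<in>JJ k. (a j * Ee j y) * integral\<^sup>L M0 (\<lambda>s. of_real (\<phi> s) * Ee (- j) s))"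
    using m(2) Dens_integrable_Ee[OF phi]
    by (simp add: Bochner_Integration.integral_sum integral_mult_right_zero)
  also have "\<dots> = 1 + tpc (\<lambda>j. a j * fc (\<lambda>x. complex_of_real (\<phi> x)) (- j)) k y"
    unfolding tpc_def fc_real_eq using m(3) by (simp add: mult_ac)
  finally show ?thesis .
qed

lemma inner_tpc_real:
  assumes symb: "\<And>j. b (- j) = cnj (b j)" and symb': "\<And>j. b' (- j) = cnj (b' j)"
  shows "integral\<^sup>L M0 (\<lambda>x. (1 + Re (tpc b k x)) * (1 + Re (tpc b' k' x))) =
    1 + Re (\<Sum>j\<in>JJ (min k k'). b j * cnj (b' j))"
proof -
  have r: "complex_of_real (Re (tpc b k x)) = tpc b k x" for x using tpc_real[where a=b, OF symb] by simp
  have r': "complex_of_real (Re (tpc b' k' x)) = cnj (tpc b' k' x)" for x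
    using tpc_real[where a=b', OF symb', of k' x] by (metis complex_cnj_complex_of_real)
  have ii: "integrable M0 (\<lambda>x. tpc b k x * cnj (tpc b' k' x))"
    by (rule integrable_M0_cont) (intro continuous_intros)
  have ic: "integrable M0 (\<lambda>x. cnj (tpc b' k' x))"
    by (rule integrable_M0_cont) (intro continuous_intros)
  have "complex_of_real (integral\<^sup>L M0 (\<lambda>x. (1 + Re (tpc b k x)) * (1 + Re (tpc b' k' x)))) =
     integral\<^sup>L M0 (\<lambda>x. 1 + tpc b k x + cnj (tpc b' k' x) + tpc b k x * cnj (tpc b' k' x))"
    unfolding of_real_integral
    by (intro Bochner_Integration.integral_cong refl) (simp add: r r' algebra_simps del: complex_cnj_complex_of_real)
  also have "\<dots> = integral\<^sup>L M0 (\<lambda>x. 1) + integral\<^sup>L M0 (tpc b k) + integral\<^sup>L M0 (\<lambda>x. cnj (tpc b' k' x))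
      + integral\<^sup>L M0 (\<lambda>x. tpc b k x * cnj (tpc b' k' x))"
  proof -
    have i1: "integrable M0 (\<lambda>x. 1::complex)" by (rule integrable_M0_cont) simp
    have i2: "integrable M0 (tpc b k)" by simp
    show ?thesis
      by (subst Bochner_Integration.integral_add, (use i1 i2 ic ii in auto)[2])+ simp
  qed
  also have "\<dots> = 1 + 0 + 0 + (\<Sum>j\<in>JJ (min k k'). b j * cnj (b' j))"
    using prob_space.prob_space[OF prob_M0]
    by (simp add: tpc_integral tpc_inner measure_def)
  finally show ?thesis
    by (metis Re_complex_of_real add.right_neutral plus_complex.sel(1) one_complex.sel(1))
qed

lemma integral_Re_M0: "integrable M (f :: _ \<Rightarrow> complex) \<Longrightarrow> integral\<^sup>L M (\<lambda>x. Re (f x)) = Re (integral\<^sup>L M f)"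
  by (rule integral_bounded_linear[OF bounded_linear_Re])

lemma tpc_norm_le: "cmod (tpc a k x) \<le> (\<Sum>j\<in>JJ k. cmod (a j))"
proof -
  have "cmod (tpc a k x) \<le> (\<Sum>j\<in>JJ k. cmod (a j * Ee j x))"
    unfolding tpc_def by (rule norm_sum)
  also have "\<dots> = (\<Sum>j\<in>JJ k. cmod (a j))" by (simp add: norm_mult)
  finally show ?thesis .
qed

definition tt :: "(real \<Rightarrow> real) \<Rightarrow> int \<Rightarrow> real" where
  "tt \<phi> j = cmod (fc (\<lambda>x. complex_of_real (\<phi> x)) j)"

lemma tt_neg: "tt \<phi> (- j) = tt \<phi> j"
  unfolding tt_def by (simp add: fc_neg)

definition ww :: "(real \<Rightarrow> real) \<Rightarrow> (nat \<Rightarrow> real) \<Rightarrow> real \<Rightarrow> int \<Rightarrow> real" where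
  "ww \<phi> \<theta> z j = \<theta> (nat \<bar>j\<bar>) * z / (tt \<phi> j)\<^sup>2"

lemma ww_neg: "ww \<phi> \<theta> z (- j) = ww \<phi> \<theta> z j"
  unfolding ww_def by (simp add: tt_neg)

definition ff :: "(real \<Rightarrow> real) \<Rightarrow> (nat \<Rightarrow> real) \<Rightarrow> real \<Rightarrow> nat \<Rightarrow> real \<Rightarrow> real" where
  "ff \<phi> \<theta> z k x = 1 + Re (tpc (\<lambda>j. of_real (ww \<phi> \<theta> z j)) k x)"

definition gg :: "(real \<Rightarrow> real) \<Rightarrow> (nat \<Rightarrow> real) \<Rightarrow> real \<Rightarrow> nat \<Rightarrow> real \<Rightarrow> real" where
  "gg \<phi> \<theta> z k y = 1 + Re (tpc (\<lambda>j. of_real (ww \<phi> \<theta> z j) * fc (\<lambda>x. complex_of_real (\<phi> x)) (- j)) k y)"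

lemma ww_sym: "complex_of_real (ww \<phi> \<theta> z (- j)) = cnj (complex_of_real (ww \<phi> \<theta> z j))"
  by (simp add: ww_neg)

lemma wb_sym: "of_real (ww \<phi> \<theta> z (- j)) * fc (\<lambda>x. complex_of_real (\<phi> x)) (- (- j)) =
   cnj (of_real (ww \<phi> \<theta> z j) * fc (\<lambda>x. complex_of_real (\<phi> x)) (- j))"
  by (simp add: ww_neg fc_neg)

lemma ff_cont: "continuous_on S (ff \<phi> \<theta> z k)"
  unfolding ff_def by (intro continuous_intros)

lemma gg_cont: "continuous_on S (gg \<phi> \<theta> z k)"
  unfolding gg_def by (intro continuous_intros)

lemma ff_complex: "complex_of_real (ff \<phi> \<theta> z k x) = 1 + tpc (\<lambda>j. of_real (ww \<phi> \<theta> z j)) k x"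
  using tpc_real[where a="\<lambda>j. of_real (ww \<phi> \<theta> z j)", OF ww_sym, of k x] unfolding ff_def by simp

lemma cconv_ff:
  assumes "\<phi> \<in> Dens"
  shows "cconv (ff \<phi> \<theta> z k) \<phi> y = gg \<phi> \<theta> z k y"
proof -
  have "complex_of_real (cconv (ff \<phi> \<theta> z k) \<phi> y) =
    1 + tpc (\<lambda>j. of_real (ww \<phi> \<theta> z j) * fc (\<lambda>x. complex_of_real (\<phi> x)) (- j)) k y"
    by (rule cconv_tpc[where a="\<lambda>j. of_real (ww \<phi> \<theta> z j)", OF assms ww_sym]) (simp add: ff_def)
  then show ?thesis unfolding gg_def
    by (metis Re_complex_of_real plus_complex.sel(1) one_complex.sel(1))
qed

lemma sum_abs_ww: "(\<Sum>j\<in>JJ k. cmod (complex_of_real (ww \<phi> \<theta> z j))) = (\<Sum>j\<in>JJ k. \<bar>ww \<phi> \<theta> z j\<bar>)"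
  by simp

lemma ff_bounds:
  assumes "(\<Sum>j\<in>JJ k. \<bar>ww \<phi> \<theta> z j\<bar>) \<le> 1"
  shows "0 \<le> ff \<phi> \<theta> z k x"
proof -
  have "\<bar>Re (tpc (\<lambda>j. of_real (ww \<phi> \<theta> z j)) k x)\<bar> \<le> cmod (tpc (\<lambda>j. of_real (ww \<phi> \<theta> z j)) k x)"
    by (rule abs_Re_le_cmod)
  also have "\<dots> \<le> 1" using tpc_norm_le[of "\<lambda>j. of_real (ww \<phi> \<theta> z j)" k x] assms by simp
  finally show ?thesis unfolding ff_def by linarith
qed

lemma gg_bounds:
  assumes phi: "\<phi> \<in> Dens" and s: "(\<Sum>j\<in>JJ k. \<bar>ww \<phi> \<theta> z j\<bar>) \<le> 1"
  shows "0 \<le> gg \<phi> \<theta> z k y" "gg \<phi> \<theta> z k y \<le> 2"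
proof -
  have "0 \<le> cconv (ff \<phi> \<theta> z k) \<phi> y"
    unfolding cconv_def
    by (rule Bochner_Integration.integral_nonneg) (use phi ff_bounds[OF s] in \<open>auto simp: Dens_def\<close>)
  then show "0 \<le> gg \<phi> \<theta> z k y" using cconv_ff[OF phi] by simp
  let ?b = "\<lambda>j. of_real (ww \<phi> \<theta> z j) * fc (\<lambda>x. complex_of_real (\<phi> x)) (- j)"
  have "\<bar>Re (tpc ?b k y)\<bar> \<le> cmod (tpc ?b k y)" by (rule abs_Re_le_cmod)
  also have "\<dots> \<le> (\<Sum>j\<in>JJ k. cmod (?b j))" by (rule tpc_norm_le)
  also have "\<dots> \<le> (\<Sum>j\<in>JJ k. \<bar>ww \<phi> \<theta> z j\<bar>)"
  proof (rule sum_mono)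
    fix j
    have "cmod (fc (\<lambda>x. complex_of_real (\<phi> x)) (- j)) \<le> 1" by (rule Dens_fc_le1[OF phi])
    then show "cmod (?b j) \<le> \<bar>ww \<phi> \<theta> z j\<bar>"
      by (simp add: norm_mult mult_left_le)
  qed
  finally show "gg \<phi> \<theta> z k y \<le> 2" using s unfolding gg_def by linarith
qed

lemma ff_Dens:
  assumes s: "(\<Sum>j\<in>JJ k. \<bar>ww \<phi> \<theta> z j\<bar>) \<le> 1"
  shows "ff \<phi> \<theta> z k \<in> Dens"
proof -
  have cont: "continuous_on {0..1} (\<lambda>x. complex_of_real (ff \<phi> \<theta> z k x))"
    by (intro continuous_intros ff_cont)
  have mr: "ff \<phi> \<theta> z k \<in> borel_measurable M0"
    by (rule meas_M0) (intro borel_measurable_continuous_onI ff_cont)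
  have ic: "integrable M0 (\<lambda>x. complex_of_real (ff \<phi> \<theta> z k x))" by (rule integrable_M0_cont[OF cont])
  then have ir: "integrable M0 (ff \<phi> \<theta> z k)" by (simp add: complex_of_real_integrable_eq)
  have "complex_of_real (integral\<^sup>L M0 (ff \<phi> \<theta> z k)) = integral\<^sup>L M0 (\<lambda>x. 1 + tpc (\<lambda>j. of_real (ww \<phi> \<theta> z j)) k x)"
    unfolding of_real_integral ff_complex ..
  also have "\<dots> = 1"
    using prob_space.prob_space[OF prob_M0]
    by (subst Bochner_Integration.integral_add) (auto simp: tpc_integral measure_def intro: integrable_M0_cont)
  finally have int1: "integral\<^sup>L M0 (ff \<phi> \<theta> z k) = 1" by simp
  have sq: "integrable M0 (\<lambda>x. (ff \<phi> \<theta> z k x)\<^sup>2)"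
    by (rule M0_integral_cont) (intro continuous_intros ff_cont)
  have l2: "(\<lambda>x. complex_of_real (ff \<phi> \<theta> z k x)) \<in> L2"
    unfolding L2_def using sq
    by (auto intro!: integrable_M0_cont continuous_intros ff_cont meas_M0 borel_measurable_continuous_onI)
  show ?thesis unfolding Dens_def using mr ir int1 l2 ff_bounds[OF s] by auto
qed

definition hh :: "(real \<Rightarrow> real) \<Rightarrow> (nat \<Rightarrow> real) \<Rightarrow> real \<Rightarrow> nat \<Rightarrow> real \<Rightarrow> complex" where
  "hh \<phi> \<theta> z k x = complex_of_real (ff \<phi> \<theta> z k x - fcirc x)"

lemma hh_eq: "x \<in> space M0 \<Longrightarrow> hh \<phi> \<theta> z k x = tpc (\<lambda>j. of_real (ww \<phi> \<theta> z j)) k x"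
  unfolding hh_def fcirc_def using ff_complex[of \<phi> \<theta> z k x] by simp

lemma hh_L2: "hh \<phi> \<theta> z k \<in> L2"
proof -
  have [measurable]: "ff \<phi> \<theta> z k \<in> borel_measurable M0"
    by (intro meas_M0 borel_measurable_continuous_onI ff_cont)
  have [measurable]: "fcirc \<in> borel_measurable M0"
    unfolding fcirc_def by (intro meas_M0) simp
  have m: "hh \<phi> \<theta> z k \<in> borel_measurable M0"
    unfolding hh_def by measurable
  have "integrable M0 (\<lambda>x. (cmod (tpc (\<lambda>j. of_real (ww \<phi> \<theta> z j)) k x))\<^sup>2)"
    by (rule M0_integral_cont) (intro continuous_intros)
  moreover have "integrable M0 (\<lambda>x. (cmod (hh \<phi> \<theta> z k x))\<^sup>2) \<longleftrightarrow>
     integrable M0 (\<lambda>x. (cmod (tpc (\<lambda>j. of_real (ww \<phi> \<theta> z j)) k x))\<^sup>2)"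
    by (intro Bochner_Integration.integrable_cong) (auto simp: hh_eq)
  ultimately have "integrable M0 (\<lambda>x. (cmod (hh \<phi> \<theta> z k x))\<^sup>2)" by simp
  with m show ?thesis unfolding L2_def by simp
qed

lemma fc_hh:
  assumes "i \<ge> 1"
  shows "fc (hh \<phi> \<theta> z k) (int i) = (if i \<le> k then of_real (ww \<phi> \<theta> z (int i)) else 0)"
proof -
  have "fc (hh \<phi> \<theta> z k) (int i) = integral\<^sup>L M0 (\<lambda>x. tpc (\<lambda>j. of_real (ww \<phi> \<theta> z j)) k x * Ee (int i) x)"
    unfolding fc_def cnj_ebase by (intro Bochner_Integration.integral_cong refl) (simp add: hh_eq)
  also have "\<dots> = (if i \<le> k then of_real (ww \<phi> \<theta> z (int i)) else 0)"
    using assms by (simp add: tpc_Ee JJ_def ww_neg[of \<phi> \<theta> z "int i", simplified])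
  finally show ?thesis .
qed

lemma l2norm_hh: "l2norm (hh \<phi> \<theta> z k) = sqrt (\<Sum>j\<in>JJ k. (ww \<phi> \<theta> z j)\<^sup>2)"
proof -
  let ?a = "\<lambda>j. complex_of_real (ww \<phi> \<theta> z j)"
  have "integral\<^sup>L M0 (\<lambda>x. (cmod (hh \<phi> \<theta> z k x))\<^sup>2) =
        integral\<^sup>L M0 (\<lambda>x. Re (tpc ?a k x * cnj (tpc ?a k x)))"
  proof (intro Bochner_Integration.integral_cong refl)
    fix x assume "x \<in> space M0"
    have "(cmod w)\<^sup>2 = Re (w * cnj w)" for w
      by (simp only: complex_norm_square[symmetric] Re_complex_of_real)
    then show "(cmod (hh \<phi> \<theta> z k x))\<^sup>2 = Re (tpc ?a k x * cnj (tpc ?a k x))"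
      using \<open>x \<in> space M0\<close> by (simp add: hh_eq)
  qed
  also have "\<dots> = Re (integral\<^sup>L M0 (\<lambda>x. tpc ?a k x * cnj (tpc ?a k x)))"
    by (rule integral_Re_M0) (intro integrable_M0_cont continuous_intros)
  also have "\<dots> = (\<Sum>j\<in>JJ k. (ww \<phi> \<theta> z j)\<^sup>2)"
    by (simp add: tpc_inner power2_eq_square)
  finally show ?thesis unfolding l2norm_def by simp
qed

lemma ellipsoid_hh:
  assumes "\<And>i. 1 \<le> i \<Longrightarrow> i \<le> k \<Longrightarrow> a i \<noteq> 0"
    and "2 * (\<Sum>i\<in>{1..k}. inverse ((a i)\<^sup>2) * (ww \<phi> \<theta> z (int i))\<^sup>2) \<le> R\<^sup>2"
  shows "hh \<phi> \<theta> z k \<in> ellipsoid a R"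
proof -
  let ?s = "\<Sum>i\<in>{1..k}. inverse ((a i)\<^sup>2) * (ww \<phi> \<theta> z (int i))\<^sup>2"
  have "((\<lambda>j. inverse ((a j)\<^sup>2) * (cmod (fc (hh \<phi> \<theta> z k) (int j)))\<^sup>2) has_sum ?s) {1..}"
  proof -
    have "((\<lambda>i. inverse ((a i)\<^sup>2) * (ww \<phi> \<theta> z (int i))\<^sup>2) has_sum ?s) {1..k}" by simp
    then show ?thesis
      by (rule has_sum_cong_neutral[THEN iffD1, rotated -1]) (auto simp: fc_hh)
  qed
  then show ?thesis unfolding ellipsoid_def using hh_L2 assms(2) by blast
qed

lemma gg_inner:
  "integral\<^sup>L M0 (\<lambda>y. gg \<phi> \<theta> z k y * gg \<phi> \<theta>' z' k' y) =
   1 + (\<Sum>j\<in>JJ (min k k'). ww \<phi> \<theta> z j * ww \<phi> \<theta>' z' j * (tt \<phi> j)\<^sup>2)"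
proof -
  have "integral\<^sup>L M0 (\<lambda>y. gg \<phi> \<theta> z k y * gg \<phi> \<theta>' z' k' y) =
    1 + Re (\<Sum>j\<in>JJ (min k k'). (of_real (ww \<phi> \<theta> z j) * fc (\<lambda>x. complex_of_real (\<phi> x)) (- j)) *
        cnj (of_real (ww \<phi> \<theta>' z' j) * fc (\<lambda>x. complex_of_real (\<phi> x)) (- j)))"
    unfolding gg_def by (rule inner_tpc_real) (rule wb_sym)+
  also have "\<dots> = 1 + (\<Sum>j\<in>JJ (min k k'). ww \<phi> \<theta> z j * ww \<phi> \<theta>' z' j * (tt \<phi> j)\<^sup>2)"
  proof -
    have "(of_real (ww \<phi> \<theta> z j) * fc (\<lambda>x. complex_of_real (\<phi> x)) (- j)) *
        cnj (of_real (ww \<phi> \<theta>' z' j) * fc (\<lambda>x. complex_of_real (\<phi> x)) (- j)) =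
        of_real (ww \<phi> \<theta> z j * ww \<phi> \<theta>' z' j * (tt \<phi> j)\<^sup>2)" (is "?P j = _") for j
    proof -
      have "fc (\<lambda>x. complex_of_real (\<phi> x)) (- j) * cnj (fc (\<lambda>x. complex_of_real (\<phi> x)) (- j)) =
            of_real ((tt \<phi> j)\<^sup>2)"
        using tt_neg[of \<phi> j] complex_norm_square[of "fc (\<lambda>x. complex_of_real (\<phi> x)) (- j)"]
        unfolding tt_def by simp
      then show ?thesis by (simp add: mult_ac)
    qed
    then have "(\<Sum>j\<in>JJ (min k k'). ?P j) = (\<Sum>j\<in>JJ (min k k'). of_real (ww \<phi> \<theta> z j * ww \<phi> \<theta>' z' j * (tt \<phi> j)\<^sup>2))"
      by (intro sum.cong refl)
    also have "\<dots> = of_real (\<Sum>j\<in>JJ (min k k'). ww \<phi> \<theta> z j * ww \<phi> \<theta>' z' j * (tt \<phi> j)\<^sup>2)"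
      by (rule of_real_sum[symmetric])
    finally show ?thesis by (simp only: Re_complex_of_real)
  qed
  finally show ?thesis .
qed

lemma M0_top[simp]: "{0..<1} \<in> sets M0"
  using sets.top[of M0] by simp

lemma sigma_finite_M0: "sigma_finite_measure M0"
  using prob_M0 by (rule prob_space_imp_sigma_finite)

lemma emeasure_density_space':
  assumes "f \<in> borel_measurable M"
  shows "emeasure (density M f) (space (density M f)) = (\<integral>\<^sup>+ x. f x \<partial>M)"
  using assms by (subst emeasure_density) (auto intro!: nn_integral_cong)

lemma indicator_PiE_prod:
  assumes "finite I" "x \<in> extensional I"
  shows "(indicator (Pi\<^sub>E I A) x :: ennreal) = (\<Prod>i\<in>I. indicator (A i) (x i))"
proof (cases "\<forall>i\<in>I. x i \<in> A i")
  case True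
  then have "x \<in> Pi\<^sub>E I A" using assms(2) by (auto simp: PiE_def)
  then show ?thesis using True by simp
next
  case False
  then obtain i where i: "i \<in> I" "x i \<notin> A i" by blast
  then have "x \<notin> Pi\<^sub>E I A" by auto
  moreover have "(\<Prod>i\<in>I. indicator (A i) (x i) :: ennreal) = 0"
    using i assms(1) by (intro prod_zero) (auto intro!: bexI[of _ i])
  ultimately show ?thesis by simp
qed

lemma PiM_density_eq:
  fixes g :: "real \<Rightarrow> real"
  assumes I: "finite I" and g[measurable]: "g \<in> borel_measurable M0"
    and fin: "(\<integral>\<^sup>+ y. ennreal (g y) \<partial>M0) < \<infinity>"
  shows "PiM I (\<lambda>_. density M0 (\<lambda>y. ennreal (g y))) =
         density (PiM I (\<lambda>_. M0)) (\<lambda>x. \<Prod>i\<in>I. ennreal (g (x i)))"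
proof -
  let ?D = "density M0 (\<lambda>y. ennreal (g y))"
  have "finite_measure ?D"
    by (rule finite_measureI) (use fin emeasure_density_space'[of "\<lambda>y. ennreal (g y)" M0] in simp)
  then have sfD: "sigma_finite_measure ?D" by (rule finite_measure.sigma_finite_measure) 
  interpret D: product_sigma_finite "\<lambda>_. ?D"
    unfolding product_sigma_finite_def using sfD by simp
  interpret M: product_sigma_finite "\<lambda>_. M0"
    unfolding product_sigma_finite_def using sigma_finite_M0 by simp
  show ?thesis
  proof (rule D.PiM_eqI[OF I, symmetric])
    show "sets (density (Pi\<^sub>M I (\<lambda>_. M0)) (\<lambda>x. \<Prod>i\<in>I. ennreal (g (x i)))) = sets (Pi\<^sub>M I (\<lambda>_. ?D))"
      using sets_PiM_cong[of I I "\<lambda>_. ?D" "\<lambda>_. M0"] by simp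
  next
    fix A assume A: "\<And>i. i \<in> I \<Longrightarrow> A i \<in> sets ?D"
    then have A': "\<And>i. i \<in> I \<Longrightarrow> A i \<in> sets M0" by simp
    have PA: "Pi\<^sub>E I A \<in> sets (Pi\<^sub>M I (\<lambda>_. M0))" using A' by (intro sets_PiM_I_finite I) auto
    have "emeasure (density (Pi\<^sub>M I (\<lambda>_. M0)) (\<lambda>x. \<Prod>i\<in>I. ennreal (g (x i)))) (Pi\<^sub>E I A) =
      (\<integral>\<^sup>+ x. (\<Prod>i\<in>I. ennreal (g (x i))) * indicator (Pi\<^sub>E I A) x \<partial>Pi\<^sub>M I (\<lambda>_. M0))"
      using PA by (subst emeasure_density) (auto intro!: borel_measurable_prod_ennreal)
    also have "\<dots> = (\<integral>\<^sup>+ x. (\<Prod>i\<in>I. ennreal (g (x i)) * indicator (A i) (x i)) \<partial>Pi\<^sub>M I (\<lambda>_. M0))"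
    proof (intro nn_integral_cong)
      fix x assume "x \<in> space (Pi\<^sub>M I (\<lambda>_. M0))"
      then have "x \<in> extensional I" by (simp add: space_PiM PiE_def)
      then show "(\<Prod>i\<in>I. ennreal (g (x i))) * indicator (Pi\<^sub>E I A) x =
          (\<Prod>i\<in>I. ennreal (g (x i)) * indicator (A i) (x i))"
        by (simp add: indicator_PiE_prod[OF I] prod.distrib)
    qed
    also have "\<dots> = (\<Prod>i\<in>I. \<integral>\<^sup>+ y. ennreal (g y) * indicator (A i) y \<partial>M0)"
      using A' by (intro M.product_nn_integral_prod I) auto
    also have "\<dots> = (\<Prod>i\<in>I. emeasure ?D (A i))"
      using A' by (intro prod.cong refl) (simp add: emeasure_density)
    finally show "emeasure (density (Pi\<^sub>M I (\<lambda>_. M0)) (\<lambda>x. \<Prod>i\<in>I. ennreal (g (x i)))) (Pi\<^sub>E I A) =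
      (\<Prod>i\<in>I. emeasure ?D (A i))" .
  qed
qed

lemma PiM_measure_le1:
  fixes g :: "real \<Rightarrow> real"
  assumes I: "finite I" and g[measurable]: "g \<in> borel_measurable M0"
    and fin: "(\<integral>\<^sup>+ y. ennreal (g y) \<partial>M0) \<le> 1"
  shows "measure (PiM I (\<lambda>_. density M0 (\<lambda>y. ennreal (g y)))) X \<le> 1"
proof -
  let ?D = "density M0 (\<lambda>y. ennreal (g y))"
  have sp: "emeasure ?D (space ?D) \<le> 1" using fin emeasure_density_space'[of "\<lambda>y. ennreal (g y)" M0] by simp
  then have "finite_measure ?D"
    by (intro finite_measureI) (auto simp: top_unique)
  then have sfD: "sigma_finite_measure ?D" by (rule finite_measure.sigma_finite_measure)
  interpret D: product_sigma_finite "\<lambda>_. ?D"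
    unfolding product_sigma_finite_def using sfD by simp
  have tot: "emeasure (PiM I (\<lambda>_. ?D)) (space (PiM I (\<lambda>_. ?D))) \<le> 1"
  proof -
    have "space (PiM I (\<lambda>_. ?D)) = Pi\<^sub>E I (\<lambda>_. space ?D)" by (simp add: space_PiM)
    then have "emeasure (PiM I (\<lambda>_. ?D)) (space (PiM I (\<lambda>_. ?D))) = (\<Prod>i\<in>I. emeasure ?D (space ?D))"
      using D.emeasure_PiM[OF I, of "\<lambda>_. space ?D"] by simp
    also have "\<dots> \<le> (\<Prod>i\<in>I. 1)" by (intro prod_mono_ennreal) (use sp in auto)
    finally show ?thesis by simp
  qed
  show ?thesis
  proof (cases "X \<in> sets (PiM I (\<lambda>_. ?D))")
    case True
    then have "emeasure (PiM I (\<lambda>_. ?D)) X \<le> 1"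
      using emeasure_space[of "PiM I (\<lambda>_. ?D)" X] tot by (meson order.trans)
    then have "enn2real (emeasure (PiM I (\<lambda>_. ?D)) X) \<le> enn2real 1"
      by (intro enn2real_mono) auto
    then show ?thesis unfolding measure_def by simp
  next
    case False
    then show ?thesis by (simp add: measure_notin_sets)
  qed
qed

lemma ennreal_integral_le_nn:
  fixes F :: "'a \<Rightarrow> real"
  assumes "\<And>x. x \<in> space M \<Longrightarrow> 0 \<le> F x"
  shows "ennreal (integral\<^sup>L M F) \<le> (\<integral>\<^sup>+ x. ennreal (F x) \<partial>M)"
proof (cases "integrable M F")
  case True
  then show ?thesis using assms by (subst nn_integral_eq_integral) auto
next
  case False
  then show ?thesis by (simp add: not_integrable_integral_eq)
qed

lemma id_meas_M0[measurable]: "(\<lambda>x::real. x) \<in> borel_measurable M0"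
  by (rule meas_M0) simp

lemma shift_M0:
  assumes f[measurable]: "f \<in> borel_measurable M0" and s: "s \<in> {0..<1}"
  shows "(\<integral>\<^sup>+ y. ennreal (f (y - s - of_int \<lfloor>y - s\<rfloor>)) \<partial>M0) = (\<integral>\<^sup>+ y. ennreal (f y) \<partial>M0)"
proof -
  define G where "G x = ennreal (f x) * indicator {0..<1} x" for x
  have "(\<lambda>x. ennreal (f x)) \<in> borel_measurable M0" by measurable
  then have Gm[measurable]: "G \<in> borel_measurable borel"
    unfolding G_def M0_def
    by (subst (asm) borel_measurable_restrict_space_iff_ennreal) auto
  have "(\<integral>\<^sup>+ y. ennreal (f (y - s - of_int \<lfloor>y - s\<rfloor>)) \<partial>M0) =
      (\<integral>\<^sup>+ y. ennreal (f (y - s - of_int \<lfloor>y - s\<rfloor>)) * indicator {0..<1} y \<partial>lborel)"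
    unfolding M0_def by (rule nn_integral_restrict_space) auto
  also have "\<dots> = (\<integral>\<^sup>+ y. G (y - s) * indicator {s..<1} y + G (y - s + 1) * indicator {0..<s} y \<partial>lborel)"
  proof (intro nn_integral_cong)
    fix y :: real
    show "ennreal (f (y - s - of_int \<lfloor>y - s\<rfloor>)) * indicator {0..<1} y =
       G (y - s) * indicator {s..<1} y + G (y - s + 1) * indicator {0..<s} y"
    proof (cases "y \<in> {0..<1}")
      case True
      show ?thesis
      proof (cases "s \<le> y")
        case True
        then have "\<lfloor>y - s\<rfloor> = 0" using \<open>y \<in> {0..<1}\<close> s by (intro floor_unique) auto
        then show ?thesis using True \<open>y \<in> {0..<1}\<close> s by (auto simp: G_def indicator_def)
      next
        case False
        then have "\<lfloor>y - s\<rfloor> = -1" using \<open>y \<in> {0..<1}\<close> s by (intro floor_unique) auto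
        then show ?thesis using False \<open>y \<in> {0..<1}\<close> s by (auto simp: G_def indicator_def)
      qed
    next
      case False
      then show ?thesis using s by (auto simp: G_def indicator_def)
    qed
  qed
  also have "\<dots> = (\<integral>\<^sup>+ y. G (y - s) * indicator {s..<1} y \<partial>lborel) +
                  (\<integral>\<^sup>+ y. G (y - s + 1) * indicator {0..<s} y \<partial>lborel)"
    by (rule nn_integral_add) auto
  also have "(\<integral>\<^sup>+ y. G (y - s) * indicator {s..<1} y \<partial>lborel) =
             (\<integral>\<^sup>+ z. G z * indicator {0..<1 - s} z \<partial>lborel)"
  proof -
    have "(\<integral>\<^sup>+ y. G (y - s) * indicator {s..<1} y \<partial>lborel) =
        (\<integral>\<^sup>+ z. G (s + 1 * z - s) * indicator {s..<1} (s + 1 * z) \<partial>lborel)"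
      using nn_integral_real_affine[of "\<lambda>y. G (y - s) * indicator {s..<1} y" 1 s] by simp
    also have "\<dots> = (\<integral>\<^sup>+ z. G z * indicator {0..<1 - s} z \<partial>lborel)"
      by (intro nn_integral_cong) (auto simp: indicator_def)
    finally show ?thesis .
  qed
  also have "(\<integral>\<^sup>+ y. G (y - s + 1) * indicator {0..<s} y \<partial>lborel) =
             (\<integral>\<^sup>+ z. G z * indicator {1 - s..<1} z \<partial>lborel)"
  proof -
    have "(\<integral>\<^sup>+ y. G (y - s + 1) * indicator {0..<s} y \<partial>lborel) =
        (\<integral>\<^sup>+ z. G ((s - 1) + 1 * z - s + 1) * indicator {0..<s} ((s - 1) + 1 * z) \<partial>lborel)"
      using nn_integral_real_affine[of "\<lambda>y. G (y - s + 1) * indicator {0..<s} y" 1 "s - 1"] by simp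
    also have "\<dots> = (\<integral>\<^sup>+ z. G z * indicator {1 - s..<1} z \<partial>lborel)"
      by (intro nn_integral_cong) (auto simp: indicator_def)
    finally show ?thesis .
  qed
  also have "(\<integral>\<^sup>+ z. G z * indicator {0..<1 - s} z \<partial>lborel) + (\<integral>\<^sup>+ z. G z * indicator {1 - s..<1} z \<partial>lborel)
      = (\<integral>\<^sup>+ z. G z * indicator {0..<1 - s} z + G z * indicator {1 - s..<1} z \<partial>lborel)"
    by (rule nn_integral_add[symmetric]) auto
  also have "\<dots> = (\<integral>\<^sup>+ z. ennreal (f z) * indicator {0..<1} z \<partial>lborel)"
    using s by (intro nn_integral_cong) (auto simp: G_def indicator_def)
  also have "\<dots> = (\<integral>\<^sup>+ y. ennreal (f y) \<partial>M0)"
    unfolding M0_def by (rule nn_integral_restrict_space[symmetric]) auto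
  finally show ?thesis .
qed

lemma frac_meas[measurable]:
  "(\<lambda>p::real \<times> real. fst p - snd p - of_int \<lfloor>fst p - snd p\<rfloor>) \<in> measurable (M0 \<Otimes>\<^sub>M M0) M0"
proof -
  have [measurable]: "(\<lambda>p::real\<times>real. fst p) \<in> borel_measurable (M0 \<Otimes>\<^sub>M M0)"
    using measurable_compose[OF measurable_fst id_meas_M0] by simp
  have [measurable]: "(\<lambda>p::real\<times>real. snd p) \<in> borel_measurable (M0 \<Otimes>\<^sub>M M0)"
    using measurable_compose[OF measurable_snd id_meas_M0] by simp
  have d: "(\<lambda>p::real \<times> real. fst p - snd p) \<in> borel_measurable (M0 \<Otimes>\<^sub>M M0)"
    by measurable
  have "(\<lambda>p::real \<times> real. fst p - snd p - of_int \<lfloor>fst p - snd p\<rfloor>) \<in> borel_measurable (M0 \<Otimes>\<^sub>M M0)"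
    using d measurable_compose[OF d borel_measurable_real_floor] by measurable
  then show ?thesis unfolding M0_def[symmetric]
    unfolding M0_def
    by (intro measurable_restrict_space2) (use frac_in in \<open>auto simp: M0_def[symmetric]\<close>)
qed

lemma cconv_mass:
  assumes f: "f \<in> Dens" and phi: "\<phi> \<in> Dens"
  shows "(\<integral>\<^sup>+ y. ennreal (cconv f \<phi> y) \<partial>M0) \<le> 1"
proof -
  have fm[measurable]: "f \<in> borel_measurable M0" and fi: "integrable M0 f" "integral\<^sup>L M0 f = 1"
    and fp: "\<And>x. x \<in> {0..<1} \<Longrightarrow> 0 \<le> f x" using f by (auto simp: Dens_def)
  have pm[measurable]: "\<phi> \<in> borel_measurable M0" and pi: "integrable M0 \<phi>" "integral\<^sup>L M0 \<phi> = 1"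
    and pp: "\<And>x. x \<in> {0..<1} \<Longrightarrow> 0 \<le> \<phi> x" using phi by (auto simp: Dens_def)
  interpret pair_sigma_finite M0 M0
    by (intro pair_sigma_finite.intro sigma_finite_M0)
  have m2: "(\<lambda>(y, s). ennreal (f (y - s - of_int \<lfloor>y - s\<rfloor>) * \<phi> s)) \<in> borel_measurable (M0 \<Otimes>\<^sub>M M0)"
  proof -
    have a: "(\<lambda>p. f (fst p - snd p - of_int \<lfloor>fst p - snd p\<rfloor>)) \<in> borel_measurable (M0 \<Otimes>\<^sub>M M0)"
      by (rule measurable_compose[OF frac_meas fm])
    have b: "(\<lambda>p. \<phi> (snd p)) \<in> borel_measurable (M0 \<Otimes>\<^sub>M M0)"
      by (rule measurable_compose[OF measurable_snd pm])
    have "(\<lambda>p. ennreal (f (fst p - snd p - of_int \<lfloor>fst p - snd p\<rfloor>) * \<phi> (snd p))) \<in> borel_measurable (M0 \<Otimes>\<^sub>M M0)"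
      using a b by measurable
    then show ?thesis by (simp add: case_prod_beta')
  qed
  have "(\<integral>\<^sup>+ y. ennreal (cconv f \<phi> y) \<partial>M0) \<le>
      (\<integral>\<^sup>+ y. (\<integral>\<^sup>+ s. ennreal (f (y - s - of_int \<lfloor>y - s\<rfloor>) * \<phi> s) \<partial>M0) \<partial>M0)"
    unfolding cconv_def
    by (intro nn_integral_mono ennreal_integral_le_nn) (use frac_in fp pp in \<open>auto intro!: mult_nonneg_nonneg\<close>)
  also have "\<dots> = (\<integral>\<^sup>+ s. (\<integral>\<^sup>+ y. ennreal (f (y - s - of_int \<lfloor>y - s\<rfloor>) * \<phi> s) \<partial>M0) \<partial>M0)"
    by (rule Fubini'[symmetric]) (use m2 in simp)
  also have "\<dots> = (\<integral>\<^sup>+ s. ennreal (\<phi> s) * (\<integral>\<^sup>+ y. ennreal (f y) \<partial>M0) \<partial>M0)"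
  proof (intro nn_integral_cong)
    fix s assume s: "s \<in> space M0"
    have "(\<integral>\<^sup>+ y. ennreal (f (y - s - of_int \<lfloor>y - s\<rfloor>) * \<phi> s) \<partial>M0) =
        (\<integral>\<^sup>+ y. ennreal (f (y - s - of_int \<lfloor>y - s\<rfloor>)) * ennreal (\<phi> s) \<partial>M0)"
      using s pp by (intro nn_integral_cong) (simp add: ennreal_mult'')
    also have "\<dots> = (\<integral>\<^sup>+ y. ennreal (f (y - s - of_int \<lfloor>y - s\<rfloor>)) \<partial>M0) * ennreal (\<phi> s)"
    proof -
      have "(\<lambda>y. f (y - s - of_int \<lfloor>y - s\<rfloor>)) \<in> borel_measurable M0"
      proof -
        have "(\<lambda>y. (y, s)) \<in> measurable M0 (M0 \<Otimes>\<^sub>M M0)"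
          using s by (intro measurable_Pair measurable_ident_sets) auto
        from measurable_compose[OF measurable_compose[OF this frac_meas] fm] show ?thesis by simp
      qed
      then show ?thesis by (intro nn_integral_multc) (rule measurable_compose[OF _ measurable_ennreal])
    qed
    also have "\<dots> = ennreal (\<phi> s) * (\<integral>\<^sup>+ y. ennreal (f y) \<partial>M0)"
      using shift_M0[OF fm] s by (simp add: mult.commute)
    finally show "(\<integral>\<^sup>+ y. ennreal (f (y - s - of_int \<lfloor>y - s\<rfloor>) * \<phi> s) \<partial>M0) =
        ennreal (\<phi> s) * (\<integral>\<^sup>+ y. ennreal (f y) \<partial>M0)" .
  qed
  also have "(\<integral>\<^sup>+ y. ennreal (f y) \<partial>M0) = 1"
    using fi fp by (subst nn_integral_eq_integral) auto
  also have "(\<integral>\<^sup>+ s. ennreal (\<phi> s) * 1 \<partial>M0) = 1"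
    using pi pp by (simp, subst nn_integral_eq_integral) auto
  finally show ?thesis by simp
qed

lemma fact_double_ge: "2 ^ k * fact k \<le> (fact (2 * k) :: real)"
proof (induction k)
  case 0 then show ?case by simp
next
  case (Suc k)
  have "fact (2 * Suc k) = (of_nat (2 * k + 2) * of_nat (2 * k + 1)) * (fact (2 * k) :: real)"
    by (simp add: fact_Suc algebra_simps numeral_eq_Suc)
  also have "\<dots> \<ge> (of_nat (2 * k + 2)) * (2 ^ k * fact k)"
  proof -
    have "(of_nat (2 * k + 2) :: real) * (2 ^ k * fact k) \<le> of_nat (2 * k + 2) * fact (2 * k)"
      using Suc by (intro mult_left_mono) auto
    also have "\<dots> \<le> (of_nat (2 * k + 2) * of_nat (2 * k + 1)) * fact (2 * k)"
      by (intro mult_right_mono) auto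
    finally show ?thesis .
  qed
  finally show ?case by (simp add: fact_Suc algebra_simps)
qed

lemma cosh_le_exp_sq: "cosh (x::real) \<le> exp (x\<^sup>2 / 2)"
proof -
  have e: "(\<lambda>k. (x\<^sup>2 / 2) ^ k /\<^sub>R fact k) sums exp (x\<^sup>2 / 2)" by (rule exp_converges)
  have "(\<lambda>n. if even n then (\<lambda>k. (x\<^sup>2 / 2) ^ k /\<^sub>R fact k) (n div 2) else (\<lambda>_. 0) ((n - 1) div 2))
      sums (0 + exp (x\<^sup>2 / 2))" (is "?x sums _")
    by (rule sums_if[OF sums_zero e])
  then have e2: "(\<lambda>n. if even n then (x\<^sup>2 / 2) ^ (n div 2) / fact (n div 2) else 0) sums exp (x\<^sup>2 / 2)"
  proof -
    have eq: "\<And>a b::real. a /\<^sub>R b = a / b" by (simp add: divide_inverse mult.commute)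
    show ?thesis using \<open>?x sums _\<close> by (simp only: eq add_0_left)
  qed
  have c: "(\<lambda>n. if even n then x ^ n / fact n else 0) sums cosh x"
  proof -
    have eq: "\<And>a b::real. a /\<^sub>R b = a / b" by (simp add: divide_inverse mult.commute)
    show ?thesis using cosh_converges[of x] by (simp only: eq)
  qed
  show ?thesis
  proof (rule sums_le[OF _ c e2])
    fix n :: nat
    show "(if even n then x ^ n / fact n else 0) \<le> (if even n then (x\<^sup>2 / 2) ^ (n div 2) / fact (n div 2) else 0)"
    proof (cases "even n")
      case True
      then obtain k where n: "n = 2 * k" by blast
      have xk: "x ^ n = (x\<^sup>2) ^ k" unfolding n by (simp add: power_mult)
      have p: "0 \<le> (x\<^sup>2) ^ k" by simp
      have "(x\<^sup>2) ^ k / fact (2 * k) \<le> (x\<^sup>2) ^ k / (2 ^ k * fact k)"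
        by (intro divide_left_mono p fact_double_ge) (auto intro!: mult_pos_pos)
      moreover have "(x\<^sup>2 / 2) ^ k / fact k = (x\<^sup>2) ^ k / (2 ^ k * fact k)"
        by (simp add: power_divide)
      moreover have "x ^ (2 * k) = (x\<^sup>2) ^ k" by (simp add: power_mult)
      ultimately show ?thesis using True unfolding n by simp
    qed simp
  qed
qed

lemma sum_sum_prod_PiE:
  fixes F :: "'i \<Rightarrow> 'b \<Rightarrow> 'b \<Rightarrow> 'c::comm_semiring_1"
  assumes I: "finite I" and S: "finite S"
  shows "(\<Sum>\<theta>\<in>Pi\<^sub>E I (\<lambda>_. S). \<Sum>\<theta>'\<in>Pi\<^sub>E I (\<lambda>_. S). \<Prod>i\<in>I. F i (\<theta> i) (\<theta>' i)) =
         (\<Prod>i\<in>I. \<Sum>s\<in>S. \<Sum>s'\<in>S. F i s s')"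
proof -
  have "(\<Sum>\<theta>\<in>Pi\<^sub>E I (\<lambda>_. S). \<Sum>\<theta>'\<in>Pi\<^sub>E I (\<lambda>_. S). \<Prod>i\<in>I. F i (\<theta> i) (\<theta>' i)) =
        (\<Sum>\<theta>\<in>Pi\<^sub>E I (\<lambda>_. S). \<Prod>i\<in>I. \<Sum>s'\<in>S. F i (\<theta> i) s')"
    by (intro sum.cong refl) (rule prod_sum_PiE[OF I S, symmetric])
  also have "\<dots> = (\<Prod>i\<in>I. \<Sum>s\<in>S. \<Sum>s'\<in>S. F i s s')"
    by (rule prod_sum_PiE[OF I S, symmetric])
  finally show ?thesis .
qed

lemma sum_signs_exp: "(\<Sum>s\<in>{-1, 1::real}. \<Sum>s'\<in>{-1, 1::real}. exp (b * s * s')) = 4 * cosh b"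
  by (simp add: cosh_def)

lemma int_bdd:
  fixes f :: "'a \<Rightarrow> real"
  assumes "finite_measure M" "f \<in> borel_measurable M" "\<And>x. x \<in> space M \<Longrightarrow> \<bar>f x\<bar> \<le> C"
  shows "integrable M f"
  using assms by (intro finite_measure.integrable_const_bound[where B=C]) auto

lemma lecam:
  fixes g :: "'q \<Rightarrow> real \<Rightarrow> real" and Q :: "'q set" and n :: nat and \<alpha> :: real
  defines "P0 \<equiv> PiM {0..<n} (\<lambda>_. M0)"
  assumes Q: "finite Q" "Q \<noteq> {}"
    and gm: "\<And>q. q \<in> Q \<Longrightarrow> g q \<in> borel_measurable M0"
    and gb: "\<And>q y. q \<in> Q \<Longrightarrow> 0 \<le> g q y \<and> g q y \<le> 2"
    and gi: "\<And>q. q \<in> Q \<Longrightarrow> integral\<^sup>L M0 (g q) = 1"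
    and B: "B \<in> sets P0"
    and chi: "(\<Sum>q\<in>Q. \<Sum>q'\<in>Q. (integral\<^sup>L M0 (\<lambda>y. g q y * g q' y)) ^ n) \<le> (1 + 2 * \<alpha>\<^sup>2) * (real (card Q))\<^sup>2"
    and al: "\<alpha> > 0"
  shows "measure P0 B + (\<Sum>q\<in>Q. measure (density P0 (\<lambda>x. ennreal (\<Prod>i\<in>{0..<n}. g q (x i)))) (space P0 - B)) / real (card Q)
         \<ge> 1 - \<alpha>"
proof -
  let ?I = "{0..<n}"
  define G where "G q x = (\<Prod>i\<in>?I. g q (x i))" for q x
  interpret P: prob_space P0 unfolding P0_def by (intro prob_space_PiM prob_M0)
  interpret M: product_sigma_finite "\<lambda>_. M0"
    unfolding product_sigma_finite_def using sigma_finite_M0 by simp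
  have fmP: "finite_measure P0" by (rule P.finite_measure_axioms)
  have fmM: "finite_measure M0" using prob_M0 by (rule prob_space.finite_measure)
  have gint: "integrable M0 (g q)" if "q \<in> Q" for q
    by (rule int_bdd[OF fmM gm[OF that], where C=2]) (use gb[OF that] in fastforce)
  have ggm: "(\<lambda>y. g q y * g q' y) \<in> borel_measurable M0" if "q \<in> Q" "q' \<in> Q" for q q'
    using gm[OF that(1)] gm[OF that(2)] by measurable
  have ggint: "integrable M0 (\<lambda>y. g q y * g q' y)" if "q \<in> Q" "q' \<in> Q" for q q'
  proof (rule int_bdd[OF fmM ggm[OF that], where C=4])
    fix y
    have "g q y * g q' y \<le> 2 * 2" using gb[OF that(1), of y] gb[OF that(2), of y] by (intro mult_mono) auto
    then show "\<bar>g q y * g q' y\<bar> \<le> 4" using gb[OF that(1), of y] gb[OF that(2), of y] by simp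
  qed
  have Gm: "G q \<in> borel_measurable P0" if "q \<in> Q" for q
    unfolding G_def P0_def
  proof (intro borel_measurable_prod)
    fix i assume "i \<in> ?I"
    then show "(\<lambda>x. g q (x i)) \<in> borel_measurable (Pi\<^sub>M ?I (\<lambda>_. M0))"
      using measurable_compose[OF measurable_component_singleton[of i ?I "\<lambda>_. M0"] gm[OF that]] by simp
  qed
  have Gb: "0 \<le> G q x \<and> G q x \<le> 2 ^ n" if "q \<in> Q" for q x
  proof -
    have "0 \<le> G q x" unfolding G_def using gb[OF that] by (intro prod_nonneg) auto
    moreover have "G q x \<le> (\<Prod>i\<in>?I. 2)" unfolding G_def using gb[OF that] by (intro prod_mono) auto
    ultimately show ?thesis by simp
  qed
  have Gint: "integrable P0 (G q)" if "q \<in> Q" for q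
    by (rule int_bdd[OF fmP Gm[OF that], where C="2^n"]) (use Gb[OF that] in fastforce)
  have GI: "integral\<^sup>L P0 (G q) = 1" if "q \<in> Q" for q
    unfolding G_def P0_def using gi[OF that] gint[OF that]
    by (subst M.product_integral_prod) auto
  have GG: "integral\<^sup>L P0 (\<lambda>x. G q x * G q' x) = (integral\<^sup>L M0 (\<lambda>y. g q y * g q' y)) ^ n"
    if "q \<in> Q" "q' \<in> Q" for q q'
  proof -
    have "integral\<^sup>L P0 (\<lambda>x. G q x * G q' x) = integral\<^sup>L P0 (\<lambda>x. \<Prod>i\<in>?I. g q (x i) * g q' (x i))"
      unfolding G_def by (simp add: prod.distrib)
    also have "\<dots> = (\<Prod>i\<in>?I. integral\<^sup>L M0 (\<lambda>y. g q y * g q' y))"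
      unfolding P0_def using ggint[OF that] by (subst M.product_integral_prod) auto
    finally show ?thesis by simp
  qed
  have meas_eq: "measure (density P0 (\<lambda>x. ennreal (G q x))) A = integral\<^sup>L P0 (\<lambda>x. G q x * indicator A x)"
    if "q \<in> Q" "A \<in> sets P0" for q A
  proof -
    have i: "integrable P0 (\<lambda>x. G q x * indicator A x)"
      using Gint[OF that(1)] that(2) by (rule integrable_real_mult_indicator[rotated])
    have "emeasure (density P0 (\<lambda>x. ennreal (G q x))) A = (\<integral>\<^sup>+ x. ennreal (G q x) * indicator A x \<partial>P0)"
      using Gm[OF that(1)] that(2) by (subst emeasure_density) auto
    also have "\<dots> = (\<integral>\<^sup>+ x. ennreal (G q x * indicator A x) \<partial>P0)"
      by (intro nn_integral_cong) (auto simp: indicator_def)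
    also have "\<dots> = ennreal (integral\<^sup>L P0 (\<lambda>x. G q x * indicator A x))"
      using i Gb[OF that(1)] by (intro nn_integral_eq_integral) (auto intro!: mult_nonneg_nonneg)
    finally show ?thesis unfolding measure_def
      using Gb[OF that(1)] by (simp add: Bochner_Integration.integral_nonneg)
  qed
  define c where "c = real (card Q)"
  have c0: "c > 0" unfolding c_def using Q by (simp add: card_gt_0_iff)
  define L where "L x = (\<Sum>q\<in>Q. G q x) / c" for x
  have Lm: "L \<in> borel_measurable P0" unfolding L_def using Gm by (intro borel_measurable_divide borel_measurable_sum) auto
  have Lb: "0 \<le> L x \<and> L x \<le> 2 ^ n" for x
  proof -
    have "(\<Sum>q\<in>Q. G q x) \<le> (\<Sum>q\<in>Q. 2 ^ n)" using Gb by (intro sum_mono) auto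
    then have "(\<Sum>q\<in>Q. G q x) \<le> c * 2 ^ n" unfolding c_def by simp
    moreover have "0 \<le> (\<Sum>q\<in>Q. G q x)" using Gb by (intro sum_nonneg) auto
    ultimately show ?thesis unfolding L_def using c0 by (auto simp: field_simps)
  qed
  have Lint: "integrable P0 L" by (rule int_bdd[OF fmP Lm, where C="2^n"]) (use Lb in fastforce)
  have LI: "integral\<^sup>L P0 L = 1"
    unfolding L_def using Gint GI c0 unfolding c_def
    by (simp add: Bochner_Integration.integral_sum)
  have Bm: "indicator B \<in> borel_measurable P0" using B by simp
  define p where "p = measure P0 B"
  have p01: "0 \<le> p" "p \<le> 1" unfolding p_def by auto
  have pI: "integral\<^sup>L P0 (indicator B) = p" unfolding p_def using B by simp
  have iB: "integrable P0 (indicator B :: _ \<Rightarrow> real)"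
    by (rule int_bdd[OF fmP Bm, where C=1]) (auto simp: indicator_def)
  have iGB: "integrable P0 (\<lambda>x. G q x * indicator B x)" if "q \<in> Q" for q
    using Gint[OF that] B by (rule integrable_real_mult_indicator[rotated])
  have iLB: "integrable P0 (\<lambda>x. L x * indicator B x)"
    using Lint B by (rule integrable_real_mult_indicator[rotated])
  have iGG: "integrable P0 (\<lambda>x. G q x * G q' x)" if "q \<in> Q" "q' \<in> Q" for q q'
  proof (rule int_bdd[OF fmP, where C="2^n * 2^n"])
    show "(\<lambda>x. G q x * G q' x) \<in> borel_measurable P0" using Gm[OF that(1)] Gm[OF that(2)] by measurable
    fix x
    have "G q x * G q' x \<le> 2^n * 2^n" using Gb[OF that(1), of x] Gb[OF that(2), of x] by (intro mult_mono) auto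
    then show "\<bar>G q x * G q' x\<bar> \<le> 2^n * 2^n" using Gb[OF that(1), of x] Gb[OF that(2), of x] by simp
  qed
  have iLL: "integrable P0 (\<lambda>x. L x * L x)"
  proof (rule int_bdd[OF fmP, where C="2^n * 2^n"])
    show "(\<lambda>x. L x * L x) \<in> borel_measurable P0" using Lm by measurable
    fix x
    have "L x * L x \<le> 2^n * 2^n" using Lb[of x] by (intro mult_mono) auto
    then show "\<bar>L x * L x\<bar> \<le> 2^n * 2^n" using Lb[of x] by simp
  qed
  have S1: "(\<Sum>q\<in>Q. measure (density P0 (\<lambda>x. ennreal (G q x))) (space P0 - B)) =
      c - c * integral\<^sup>L P0 (\<lambda>x. L x * indicator B x)"
  proof -
    have "measure (density P0 (\<lambda>x. ennreal (G q x))) (space P0 - B) = 1 - integral\<^sup>L P0 (\<lambda>x. G q x * indicator B x)"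
      if q: "q \<in> Q" for q
    proof -
      have "measure (density P0 (\<lambda>x. ennreal (G q x))) (space P0 - B) = integral\<^sup>L P0 (\<lambda>x. G q x * indicator (space P0 - B) x)"
        using q B by (intro meas_eq) auto
      also have "\<dots> = integral\<^sup>L P0 (\<lambda>x. G q x - G q x * indicator B x)"
        by (intro Bochner_Integration.integral_cong refl) (auto simp: indicator_def)
      also have "\<dots> = 1 - integral\<^sup>L P0 (\<lambda>x. G q x * indicator B x)"
        using Gint[OF q] iGB[OF q] GI[OF q] by simp
      finally show ?thesis .
    qed
    then have "(\<Sum>q\<in>Q. measure (density P0 (\<lambda>x. ennreal (G q x))) (space P0 - B)) =
        (\<Sum>q\<in>Q. 1 - integral\<^sup>L P0 (\<lambda>x. G q x * indicator B x))" by (intro sum.cong) auto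
    also have "\<dots> = c - (\<Sum>q\<in>Q. integral\<^sup>L P0 (\<lambda>x. G q x * indicator B x))"
      unfolding c_def by (simp add: sum_subtractf)
    also have "(\<Sum>q\<in>Q. integral\<^sup>L P0 (\<lambda>x. G q x * indicator B x)) = c * integral\<^sup>L P0 (\<lambda>x. L x * indicator B x)"
    proof -
      have "integral\<^sup>L P0 (\<lambda>x. L x * indicator B x) = integral\<^sup>L P0 (\<lambda>x. (\<Sum>q\<in>Q. G q x * indicator B x) / c)"
        unfolding L_def by (simp add: sum_distrib_right)
      also have "\<dots> = (\<Sum>q\<in>Q. integral\<^sup>L P0 (\<lambda>x. G q x * indicator B x)) / c"
        using iGB by (simp add: Bochner_Integration.integral_sum)
      finally show ?thesis using c0 by simp
    qed
    finally show ?thesis .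
  qed
  have S3: "integral\<^sup>L P0 (\<lambda>x. (indicator B x - p) * (L x - 1)) = integral\<^sup>L P0 (\<lambda>x. L x * indicator B x) - p"
  proof -
    have "integral\<^sup>L P0 (\<lambda>x. (indicator B x - p) * (L x - 1)) =
        integral\<^sup>L P0 (\<lambda>x. (L x * indicator B x - indicator B x) - (p * L x - p))"
      by (intro Bochner_Integration.integral_cong refl) (simp add: algebra_simps)
    also have "\<dots> = (integral\<^sup>L P0 (\<lambda>x. L x * indicator B x) - p) - (p * 1 - p)"
      using iLB iB Lint LI pI P.prob_space by simp
    finally show ?thesis by simp
  qed
  have S5: "integral\<^sup>L P0 (\<lambda>x. (indicator B x - p)\<^sup>2) \<le> 1 / 4"
  proof -
    have "integral\<^sup>L P0 (\<lambda>x. (indicator B x - p)\<^sup>2) = integral\<^sup>L P0 (\<lambda>x. (1 - 2 * p) * indicator B x + p\<^sup>2)"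
      by (intro Bochner_Integration.integral_cong refl) (auto simp: indicator_def power2_eq_square algebra_simps)
    also have "\<dots> = (1 - 2 * p) * p + p\<^sup>2" using iB pI P.prob_space by simp
    also have "\<dots> \<le> 1 / 4"
    proof -
      have "(1 - 2 * p) * p + p\<^sup>2 = 1/4 - (p - 1/2)\<^sup>2" by (simp add: power2_eq_square algebra_simps)
      then show ?thesis by simp
    qed
    finally show ?thesis .
  qed
  have LL: "integral\<^sup>L P0 (\<lambda>x. L x * L x) \<le> 1 + 2 * \<alpha>\<^sup>2"
  proof -
    have "integral\<^sup>L P0 (\<lambda>x. L x * L x) = integral\<^sup>L P0 (\<lambda>x. (\<Sum>q\<in>Q. \<Sum>q'\<in>Q. G q x * G q' x) / c\<^sup>2)"
      unfolding L_def by (simp add: sum_product power2_eq_square)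
    also have "\<dots> = (\<Sum>q\<in>Q. \<Sum>q'\<in>Q. integral\<^sup>L P0 (\<lambda>x. G q x * G q' x)) / c\<^sup>2"
    proof -
      have "integral\<^sup>L P0 (\<lambda>x. \<Sum>q\<in>Q. \<Sum>q'\<in>Q. G q x * G q' x) = (\<Sum>q\<in>Q. \<Sum>q'\<in>Q. integral\<^sup>L P0 (\<lambda>x. G q x * G q' x))"
        using iGG by (simp add: Bochner_Integration.integral_sum)
      then show ?thesis by simp
    qed
    also have "\<dots> = (\<Sum>q\<in>Q. \<Sum>q'\<in>Q. (integral\<^sup>L M0 (\<lambda>y. g q y * g q' y)) ^ n) / c\<^sup>2"
      using GG by simp
    also have "\<dots> \<le> 1 + 2 * \<alpha>\<^sup>2" using chi c0 unfolding c_def[symmetric] by (simp add: divide_le_eq)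
    finally show ?thesis .
  qed
  have S6: "integral\<^sup>L P0 (\<lambda>x. (L x - 1)\<^sup>2) \<le> 2 * \<alpha>\<^sup>2"
  proof -
    have "integral\<^sup>L P0 (\<lambda>x. (L x - 1)\<^sup>2) = integral\<^sup>L P0 (\<lambda>x. L x * L x - 2 * L x + 1)"
      by (intro Bochner_Integration.integral_cong refl) (simp add: power2_eq_square algebra_simps)
    also have "\<dots> = integral\<^sup>L P0 (\<lambda>x. L x * L x) - 2 * 1 + 1" using iLL Lint LI P.prob_space by simp
    finally show ?thesis using LL by simp
  qed
  have S4: "integral\<^sup>L P0 (\<lambda>x. (indicator B x - p) * (L x - 1)) \<le> 3 / 4 * \<alpha>"
  proof -
    have m1: "(\<lambda>x. (indicator B x - p) * (L x - 1)) \<in> borel_measurable P0" using Bm Lm by measurable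
    have m2: "(\<lambda>x. (indicator B x - p)\<^sup>2) \<in> borel_measurable P0" using Bm by measurable
    have m3: "(\<lambda>x. (L x - 1)\<^sup>2) \<in> borel_measurable P0" using Lm by measurable
    have bnd: "\<bar>indicator B x - p\<bar> \<le> 1" for x using p01 by (auto simp: indicator_def)
    have bndL: "\<bar>L x - 1\<bar> \<le> 2^n + 1" for x using Lb[of x] by auto
    have i1: "integrable P0 (\<lambda>x. (indicator B x - p) * (L x - 1))"
    proof (rule int_bdd[OF fmP m1, where C="1 * (2^n + 1)"])
      fix x show "\<bar>(indicator B x - p) * (L x - 1)\<bar> \<le> 1 * (2 ^ n + 1)"
        unfolding abs_mult using bnd[of x] bndL[of x] by (intro mult_mono) auto
    qed
    have i2: "integrable P0 (\<lambda>x. (indicator B x - p)\<^sup>2)"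
    proof (rule int_bdd[OF fmP m2, where C="1"])
      fix x show "\<bar>(indicator B x - p)\<^sup>2\<bar> \<le> 1"
        using power_mono[OF bnd[of x] abs_ge_zero, of 2] by simp
    qed
    have i3: "integrable P0 (\<lambda>x. (L x - 1)\<^sup>2)"
    proof (rule int_bdd[OF fmP m3, where C="(2^n + 1)^2"])
      fix x show "\<bar>(L x - 1)\<^sup>2\<bar> \<le> (2^n + 1)^2"
        using power_mono[OF bndL[of x] abs_ge_zero, of 2] by simp
    qed
    define lam where "lam = 2 * \<alpha>"
    have lam0: "lam > 0" unfolding lam_def using al by simp
    have pw: "(indicator B x - p) * (L x - 1) \<le> (lam * (indicator B x - p)\<^sup>2 + (L x - 1)\<^sup>2 / lam) / 2" for x
    proof -
      have "0 \<le> (lam * (indicator B x - p) - (L x - 1))\<^sup>2" by simp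
      then have "2 * lam * ((indicator B x - p) * (L x - 1)) \<le> lam * (lam * (indicator B x - p)\<^sup>2) + (L x - 1)\<^sup>2"
        by (simp add: power2_eq_square algebra_simps)
      then show ?thesis using lam0 by (simp add: field_simps power2_eq_square)
    qed
    have "integral\<^sup>L P0 (\<lambda>x. (indicator B x - p) * (L x - 1)) \<le>
        integral\<^sup>L P0 (\<lambda>x. (lam * (indicator B x - p)\<^sup>2 + (L x - 1)\<^sup>2 / lam) / 2)"
      by (rule integral_mono[OF i1 _ pw]) (use i2 i3 in simp)
    also have "\<dots> = (lam * integral\<^sup>L P0 (\<lambda>x. (indicator B x - p)\<^sup>2) + integral\<^sup>L P0 (\<lambda>x. (L x - 1)\<^sup>2) / lam) / 2"
      using i2 i3 by simp
    also have "\<dots> \<le> (lam * (1/4) + (2 * \<alpha>\<^sup>2) / lam) / 2"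
      using S5 S6 lam0 by (intro divide_right_mono add_mono mult_left_mono) auto
    also have "\<dots> = 3 / 4 * \<alpha>" unfolding lam_def using al by (simp add: field_simps power2_eq_square)
    finally show ?thesis .
  qed
  have "measure P0 B + (\<Sum>q\<in>Q. measure (density P0 (\<lambda>x. ennreal (G q x))) (space P0 - B)) / c
      = 1 - integral\<^sup>L P0 (\<lambda>x. (indicator B x - p) * (L x - 1))"
    unfolding S1 S3 p_def[symmetric] using c0 by (simp add: field_simps)
  also have "\<dots> \<ge> 1 - \<alpha>" using S4 al by simp
  finally show ?thesis unfolding G_def c_def by simp
qed

definition WW :: "(real \<Rightarrow> real) \<Rightarrow> nat \<Rightarrow> real" where
  "WW \<phi> k = (\<Sum>j\<in>JJ k. tt \<phi> j powr (-4))"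

lemma nu_WW: "nu \<phi> k = WW \<phi> k powr (1/4)"
  unfolding nu_def WW_def tt_def JJ_def by simp

lemma tt_powr: "tt \<phi> j > 0 \<Longrightarrow> tt \<phi> j powr (-4) = 1 / (tt \<phi> j) ^ 4"
  by (simp add: powr_minus powr_realpow divide_inverse)

lemma WW_pair:
  assumes tpos: "\<And>j. tt \<phi> j > 0"
  shows "WW \<phi> k = 2 * (\<Sum>i\<in>{1..k}. 1 / (tt \<phi> (int i)) ^ 4)"
proof -
  have "WW \<phi> k = (\<Sum>j\<in>JJ k. 1 / (tt \<phi> j) ^ 4)"
    unfolding WW_def using tpos by (intro sum.cong refl) (simp add: tt_powr)
  also have "\<dots> = 2 * (\<Sum>i\<in>{1..k}. 1 / (tt \<phi> (int i)) ^ 4)"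
    by (subst sum_JJ_pair) (auto simp: tt_neg)
  finally show ?thesis .
qed

lemma WW_ge:
  assumes phi: "\<phi> \<in> Dens" and tpos: "\<And>j. tt \<phi> j > 0"
  shows "WW \<phi> k \<ge> 2 * real k"
proof -
  have "(\<Sum>i\<in>{1..k}. 1 / (tt \<phi> (int i)) ^ 4) \<ge> (\<Sum>i\<in>{1..k}. 1)"
  proof (intro sum_mono)
    fix i
    have "tt \<phi> (int i) \<le> 1" using Dens_fc_le1[OF phi] unfolding tt_def by simp
    then have "(tt \<phi> (int i)) ^ 4 \<le> 1" using tpos[of "int i"] by (simp add: power_le_one)
    then show "1 \<le> 1 / (tt \<phi> (int i)) ^ 4" using tpos[of "int i"] by simp
  qed
  then show ?thesis using WW_pair[OF tpos] by simp
qed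

lemma nu_sq:
  assumes "WW \<phi> k \<ge> 0"
  shows "(nu \<phi> k)\<^sup>2 = sqrt (WW \<phi> k)"
proof -
  have "(nu \<phi> k)\<^sup>2 = WW \<phi> k powr (1/4) * WW \<phi> k powr (1/4)" unfolding nu_WW by (simp add: power2_eq_square)
  also have "\<dots> = WW \<phi> k powr (1/2)"
    using assms by (cases "WW \<phi> k = 0") (simp_all add: powr_add[symmetric])
  also have "\<dots> = sqrt (WW \<phi> k)" using assms by (simp add: powr_half_sqrt)
  finally show ?thesis .
qed

lemma rho_attained:
  assumes phi: "\<phi> \<in> Dens" and tpos: "\<And>j. tt \<phi> j > 0" and x: "x > 0"
  shows "1 \<le> kk \<phi> a x" "max ((a (kk \<phi> a x))\<^sup>2) ((nu \<phi> (kk \<phi> a x))\<^sup>2 / x) = (rho \<phi> a x)\<^sup>2"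
    "0 \<le> rho \<phi> a x"
proof -
  define F where "F k = max ((a k)\<^sup>2) ((nu \<phi> k)\<^sup>2 / x)" for k
  have Fge: "F k \<ge> sqrt (real k) / x" for k
  proof -
    have W0: "WW \<phi> k \<ge> 0" using WW_ge[OF phi tpos, of k] by simp
    have "sqrt (real k) \<le> sqrt (WW \<phi> k)" using WW_ge[OF phi tpos, of k] by simp
    then have "sqrt (real k) / x \<le> (nu \<phi> k)\<^sup>2 / x" using nu_sq[OF W0] x by (simp add: divide_right_mono)
    then show ?thesis unfolding F_def by simp
  qed
  define S where "S = {k. 1 \<le> k \<and> F k \<le> F 1}"
  have Sfin: "finite S"
  proof -
    have "S \<subseteq> {..nat \<lceil>(x * F 1)\<^sup>2\<rceil>}"
    proof
      fix k assume "k \<in> S"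
      then have "sqrt (real k) / x \<le> F 1" using Fge[of k] unfolding S_def by auto
      then have "sqrt (real k) \<le> x * F 1" using x by (simp add: divide_le_eq mult.commute)
      then have "(sqrt (real k))\<^sup>2 \<le> (x * F 1)\<^sup>2" by (intro power_mono) auto
      then have "real k \<le> (x * F 1)\<^sup>2" by simp
      then show "k \<in> {..nat \<lceil>(x * F 1)\<^sup>2\<rceil>}" by (simp add: le_nat_iff) linarith
    qed
    then show ?thesis by (rule finite_subset) simp
  qed
  have "1 \<in> S" unfolding S_def by simp
  obtain k0 where k0: "k0 \<in> S" "\<And>k. k \<in> S \<Longrightarrow> F k0 \<le> F k"
    using arg_min_if_finite[OF Sfin, of F] \<open>1 \<in> S\<close> by (metis empty_iff not_le)
  have k0min: "F k0 \<le> F k" if "k \<ge> 1" for k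
  proof (cases "k \<in> S")
    case True then show ?thesis by (rule k0(2))
  next
    case False
    then have "F 1 < F k" using that unfolding S_def by auto
    moreover have "F k0 \<le> F 1" using k0(1) unfolding S_def by auto
    ultimately show ?thesis by simp
  qed
  have k01: "1 \<le> k0" using k0(1) unfolding S_def by auto
  have inf: "(INF k\<in>{1..}. F k) = F k0"
    by (rule cInf_eq_minimum) (use k01 k0min in auto)
  have F0: "F k0 \<ge> 0" unfolding F_def by (simp add: le_max_iff_disj)
  have rho_eq: "(rho \<phi> a x)\<^sup>2 = F k0"
    unfolding rho_def F_def[symmetric] inf using F0 by simp
  have ex: "1 \<le> k0 \<and> F k0 = (rho \<phi> a x)\<^sup>2" using k01 rho_eq by simp
  have "1 \<le> kk \<phi> a x \<and> F (kk \<phi> a x) = (rho \<phi> a x)\<^sup>2"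
    unfolding kk_def F_def[symmetric] by (rule LeastI[of _ k0]) (rule ex)
  then show "1 \<le> kk \<phi> a x" "max ((a (kk \<phi> a x))\<^sup>2) ((nu \<phi> (kk \<phi> a x))\<^sup>2 / x) = (rho \<phi> a x)\<^sup>2"
    unfolding F_def by auto
  show "0 \<le> rho \<phi> a x" unfolding rho_def F_def[symmetric] inf using F0 by simp
qed

lemma mono_seq_le:
  assumes "\<forall>j\<ge>1. a (Suc j) \<le> (a j :: real)" "1 \<le> i" "i \<le> k"
  shows "a k \<le> a i"
  using assms(3,2)
proof (induction k)
  case 0 then show ?case by simp
next
  case (Suc k)
  show ?case
  proof (cases "i = Suc k")
    case False
    then have "i \<le> k" using Suc by simp
    then have "a k \<le> a i" using Suc by simp
    moreover have "a (Suc k) \<le> a k" using assms(1) \<open>i \<le> k\<close> \<open>1 \<le> i\<close> by simp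
    ultimately show ?thesis by simp
  qed simp
qed

lemma ww_sq:
  assumes "\<theta> (nat \<bar>j\<bar>) \<in> {-1, 1}"
  shows "(ww \<phi> \<theta> z j)\<^sup>2 = z\<^sup>2 / (tt \<phi> j) ^ 4" "\<bar>ww \<phi> \<theta> z j\<bar> = \<bar>z\<bar> / (tt \<phi> j)\<^sup>2"
  using assms unfolding ww_def by (auto simp: power2_eq_square power4_eq_xxxx abs_mult)

lemma theta_JJ: "(\<forall>i\<in>{1..k}. \<theta> i \<in> {-1, 1::real}) \<Longrightarrow> j \<in> JJ k \<Longrightarrow> \<theta> (nat \<bar>j\<bar>) \<in> {-1, 1}"
  unfolding JJ_def by (metis (mono_tags, lifting) atLeastAtMost_iff mem_Collect_eq nat_le_iff nat_mono nat_one_as_int)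

lemma pert_facts:
  fixes a :: "nat \<Rightarrow> real"
  assumes phi: "\<phi> \<in> Dens" and tpos: "\<And>j. tt \<phi> j > 0" and k: "1 \<le> k"
    and a: "\<forall>j\<ge>1. 0 < a j \<and> a (Suc j) \<le> a j"
    and Lsum: "((\<lambda>j. (a j)\<^sup>2) has_sum s') {1..}" "2 * s' \<le> L" "L > 0"
    and KI: "A\<^sup>2 * \<rho>\<^sup>2 \<le> s * (a k)\<^sup>2" "s \<le> 1 / L" "s \<le> R\<^sup>2" "0 \<le> s"
    and A: "0 \<le> A" "0 \<le> \<rho>"
    and th: "\<forall>i\<in>{1..k}. \<theta> i \<in> {-1, 1}"
    and z: "z = A * \<rho> / sqrt (WW \<phi> k)"
  shows "(\<Sum>j\<in>JJ k. \<bar>ww \<phi> \<theta> z j\<bar>) \<le> 1"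
    "hh \<phi> \<theta> z k \<in> ellipsoid a R"
    "l2norm (hh \<phi> \<theta> z k) = A * \<rho>"
proof -
  define W where "W = WW \<phi> k"
  have W2: "W = 2 * (\<Sum>i\<in>{1..k}. 1 / (tt \<phi> (int i)) ^ 4)" unfolding W_def by (rule WW_pair[OF tpos])
  have Wpos: "W > 0" using WW_ge[OF phi tpos, of k] k unfolding W_def by simp
  have z0: "0 \<le> z" unfolding z using A Wpos unfolding W_def by (intro divide_nonneg_nonneg mult_nonneg_nonneg) auto
  have zsq: "z\<^sup>2 * W = A\<^sup>2 * \<rho>\<^sup>2" unfolding z W_def[symmetric] using Wpos
    by (simp add: power_divide power_mult_distrib)
  have thJ: "\<And>j. j \<in> JJ k \<Longrightarrow> \<theta> (nat \<bar>j\<bar>) \<in> {-1, 1}" using theta_JJ[OF th] .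
  have thI: "\<And>i. i \<in> {1..k} \<Longrightarrow> \<theta> (nat \<bar>int i\<bar>) \<in> {-1, 1}" using th by simp
  have ak: "0 < a k" using a k by simp
  have aki: "a k \<le> a i" if "i \<in> {1..k}" for i using mono_seq_le[of a i k] a that by auto
  have Lk: "2 * real k * (a k)\<^sup>2 \<le> L"
  proof -
    have "(\<Sum>i\<in>{1..k}. (a k)\<^sup>2) \<le> (\<Sum>i\<in>{1..k}. (a i)\<^sup>2)"
      using aki ak by (intro sum_mono power_mono) auto
    also have "\<dots> \<le> s'"
      by (rule has_sum_mono2[OF has_sum_finite[of "{1..k}"] Lsum(1)]) auto
    finally show ?thesis using Lsum(2) by simp
  qed
  have AL: "2 * real k * (A\<^sup>2 * \<rho>\<^sup>2) \<le> 1"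
  proof -
    have "s * (a k)\<^sup>2 \<le> (1 / L) * (a k)\<^sup>2" by (rule mult_right_mono[OF KI(2)]) simp
    then have "A\<^sup>2 * \<rho>\<^sup>2 \<le> (a k)\<^sup>2 / L" using KI(1) by simp
    then have "2 * real k * (A\<^sup>2 * \<rho>\<^sup>2) \<le> 2 * real k * ((a k)\<^sup>2 / L)" by (intro mult_left_mono) auto
    also have "\<dots> \<le> 1" using Lk Lsum(3) by (simp add: field_simps)
    finally show ?thesis .
  qed
  define S2 where "S2 = (\<Sum>i\<in>{1..k}. 1 / (tt \<phi> (int i))\<^sup>2)"
  have sumabs: "(\<Sum>j\<in>JJ k. \<bar>ww \<phi> \<theta> z j\<bar>) = 2 * (z * S2)"
  proof -
    have "(\<Sum>j\<in>JJ k. \<bar>ww \<phi> \<theta> z j\<bar>) = (\<Sum>j\<in>JJ k. z / (tt \<phi> j)\<^sup>2)"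
      using thJ z0 by (intro sum.cong refl) (simp add: ww_sq)
    also have "\<dots> = 2 * (\<Sum>i\<in>{1..k}. z / (tt \<phi> (int i))\<^sup>2)"
      by (subst sum_JJ_pair) (auto simp: tt_neg)
    finally show ?thesis unfolding S2_def by (simp add: sum_distrib_left)
  qed
  have CS: "S2\<^sup>2 \<le> real k * (W / 2)"
  proof -
    have "S2\<^sup>2 \<le> (\<Sum>i\<in>{1..k}. (1 / (tt \<phi> (int i))\<^sup>2)\<^sup>2) * card {1..k}"
      unfolding S2_def by (rule sum_squared_le_sum_of_squares)
    also have "(\<Sum>i\<in>{1..k}. (1 / (tt \<phi> (int i))\<^sup>2)\<^sup>2) = W / 2"
      unfolding W2 by (simp add: power_divide power4_eq_xxxx power2_eq_square mult.assoc)
    finally show ?thesis by (simp add: mult.commute)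
  qed
  have "(2 * (z * S2))\<^sup>2 \<le> 1"
  proof -
    have "(2 * (z * S2))\<^sup>2 = 4 * z\<^sup>2 * S2\<^sup>2" by (simp add: power_mult_distrib)
    also have "\<dots> \<le> 4 * z\<^sup>2 * (real k * (W / 2))" using CS by (intro mult_left_mono) auto
    also have "\<dots> = 2 * real k * (z\<^sup>2 * W)" by simp
    also have "\<dots> = 2 * real k * (A\<^sup>2 * \<rho>\<^sup>2)" using zsq by simp
    also have "\<dots> \<le> 1" by (rule AL)
    finally show ?thesis .
  qed
  moreover have "0 \<le> 2 * (z * S2)" unfolding S2_def using z0 by (auto intro!: sum_nonneg mult_nonneg_nonneg)
  ultimately show "(\<Sum>j\<in>JJ k. \<bar>ww \<phi> \<theta> z j\<bar>) \<le> 1" unfolding sumabs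
    using power2_le_imp_le[of "2 * (z * S2)" 1] by simp
  show "hh \<phi> \<theta> z k \<in> ellipsoid a R"
  proof (rule ellipsoid_hh)
    show "\<And>i. 1 \<le> i \<Longrightarrow> i \<le> k \<Longrightarrow> a i \<noteq> 0" using a by auto
    have "(\<Sum>i\<in>{1..k}. inverse ((a i)\<^sup>2) * (ww \<phi> \<theta> z (int i))\<^sup>2) \<le>
          (\<Sum>i\<in>{1..k}. inverse ((a k)\<^sup>2) * (z\<^sup>2 / (tt \<phi> (int i)) ^ 4))"
    proof (intro sum_mono)
      fix i assume i: "i \<in> {1..k}"
      have "(a k)\<^sup>2 \<le> (a i)\<^sup>2" using aki[OF i] ak by (intro power_mono) auto
      then have "inverse ((a i)\<^sup>2) \<le> inverse ((a k)\<^sup>2)" using ak by (intro le_imp_inverse_le) auto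
      then have "inverse ((a i)\<^sup>2) * (ww \<phi> \<theta> z (int i))\<^sup>2 \<le> inverse ((a k)\<^sup>2) * (ww \<phi> \<theta> z (int i))\<^sup>2"
        by (rule mult_right_mono) simp
      moreover have "(ww \<phi> \<theta> z (int i))\<^sup>2 = z\<^sup>2 / (tt \<phi> (int i)) ^ 4"
        by (rule ww_sq(1)) (rule thI[OF i])
      ultimately show "inverse ((a i)\<^sup>2) * (ww \<phi> \<theta> z (int i))\<^sup>2 \<le> inverse ((a k)\<^sup>2) * (z\<^sup>2 / (tt \<phi> (int i)) ^ 4)"
        by simp
    qed
    also have "\<dots> = (\<Sum>i\<in>{1..k}. (inverse ((a k)\<^sup>2) * z\<^sup>2) * (1 / (tt \<phi> (int i)) ^ 4))"
      by (intro sum.cong refl) simp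
    also have "\<dots> = (inverse ((a k)\<^sup>2) * z\<^sup>2) * (\<Sum>i\<in>{1..k}. 1 / (tt \<phi> (int i)) ^ 4)"
      by (rule sum_distrib_left[symmetric])
    also have "\<dots> = inverse ((a k)\<^sup>2) * z\<^sup>2 * (W / 2)" using W2 by simp
    finally have "2 * (\<Sum>i\<in>{1..k}. inverse ((a i)\<^sup>2) * (ww \<phi> \<theta> z (int i))\<^sup>2) \<le> inverse ((a k)\<^sup>2) * (z\<^sup>2 * W)"
      by simp
    also have "\<dots> = inverse ((a k)\<^sup>2) * (A\<^sup>2 * \<rho>\<^sup>2)" using zsq by simp
    also have "\<dots> \<le> inverse ((a k)\<^sup>2) * (s * (a k)\<^sup>2)" using KI(1) ak by (intro mult_left_mono) auto
    also have "\<dots> = s" using ak by simp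
    also have "\<dots> \<le> R\<^sup>2" by (rule KI(3))
    finally show "2 * (\<Sum>i\<in>{1..k}. inverse ((a i)\<^sup>2) * (ww \<phi> \<theta> z (int i))\<^sup>2) \<le> R\<^sup>2" .
  qed
  have "(\<Sum>j\<in>JJ k. (ww \<phi> \<theta> z j)\<^sup>2) = (\<Sum>j\<in>JJ k. z\<^sup>2 * tt \<phi> j powr (-4))"
    using thJ tpos by (intro sum.cong refl) (simp add: ww_sq tt_powr)
  also have "\<dots> = z\<^sup>2 * W" unfolding W_def WW_def by (simp add: sum_distrib_left)
  finally show "l2norm (hh \<phi> \<theta> z k) = A * \<rho>"
    unfolding l2norm_hh using zsq A by (simp add: real_sqrt_mult)
qed

lemma pow_le_exp: "0 \<le> 1 + S \<Longrightarrow> (1 + S) ^ n \<le> exp (real n * S)"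
proof -
  assume h: "0 \<le> 1 + S"
  have "(1 + S) ^ n \<le> (exp S) ^ n"
    by (rule power_mono) (use h in \<open>auto simp: add.commute exp_ge_add_one_self\<close>)
  also have "\<dots> = exp (real n * S)" by (simp add: exp_of_nat_mult)
  finally show ?thesis .
qed

lemma chi_pair:
  assumes phi: "\<phi> \<in> Dens" and tpos: "\<And>j. tt \<phi> j > 0"
    and K: "k \<le> K" "k' \<le> K"
    and b1: "\<And>\<theta>. \<theta> \<in> Pi\<^sub>E {1..K} (\<lambda>_. {-1, 1}) \<Longrightarrow> (\<Sum>j\<in>JJ k. \<bar>ww \<phi> \<theta> z j\<bar>) \<le> 1"
    and b2: "\<And>\<theta>. \<theta> \<in> Pi\<^sub>E {1..K} (\<lambda>_. {-1, 1}) \<Longrightarrow> (\<Sum>j\<in>JJ k'. \<bar>ww \<phi> \<theta> z' j\<bar>) \<le> 1"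
  shows "(\<Sum>\<theta>\<in>Pi\<^sub>E {1..K} (\<lambda>_. {-1, 1}). \<Sum>\<theta>'\<in>Pi\<^sub>E {1..K} (\<lambda>_. {-1, 1}).
            (integral\<^sup>L M0 (\<lambda>y. gg \<phi> \<theta> z k y * gg \<phi> \<theta>' z' k' y)) ^ n)
         \<le> 4 ^ K * exp ((real n)\<^sup>2 * z\<^sup>2 * z'\<^sup>2 * WW \<phi> (min k k'))"
proof -
  define \<Theta> where "\<Theta> = Pi\<^sub>E {1..K} (\<lambda>_. {-1, 1::real})"
  define mk where "mk = min k k'"
  have mkK: "mk \<le> K" unfolding mk_def using K by simp
  define \<beta> where "\<beta> i = (if i \<le> mk then 2 * z * z' / (tt \<phi> (int i))\<^sup>2 else 0)" for i
  have Seq: "(\<Sum>j\<in>JJ mk. ww \<phi> \<theta> z j * ww \<phi> \<theta>' z' j * (tt \<phi> j)\<^sup>2) = (\<Sum>i\<in>{1..K}. \<theta> i * \<theta>' i * \<beta> i)"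
    for \<theta> \<theta>'
  proof -
    have "(\<Sum>j\<in>JJ mk. ww \<phi> \<theta> z j * ww \<phi> \<theta>' z' j * (tt \<phi> j)\<^sup>2) =
          (\<Sum>j\<in>JJ mk. \<theta> (nat \<bar>j\<bar>) * \<theta>' (nat \<bar>j\<bar>) * (z * z' / (tt \<phi> j)\<^sup>2))"
      using tpos by (intro sum.cong refl) (simp add: ww_def power2_eq_square field_simps)
    also have "\<dots> = 2 * (\<Sum>i\<in>{1..mk}. \<theta> i * \<theta>' i * (z * z' / (tt \<phi> (int i))\<^sup>2))"
      by (subst sum_JJ_pair) (auto simp: tt_neg)
    also have "\<dots> = (\<Sum>i\<in>{1..mk}. \<theta> i * \<theta>' i * \<beta> i)"
      unfolding \<beta>_def by (simp add: sum_distrib_left mult_ac)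
    also have "\<dots> = (\<Sum>i\<in>{1..K}. \<theta> i * \<theta>' i * \<beta> i)"
      by (rule sum.mono_neutral_left) (use mkK in \<open>auto simp: \<beta>_def\<close>)
    finally show ?thesis .
  qed
  have step1: "(integral\<^sup>L M0 (\<lambda>y. gg \<phi> \<theta> z k y * gg \<phi> \<theta>' z' k' y)) ^ n \<le>
        (\<Prod>i\<in>{1..K}. exp (real n * \<beta> i * \<theta> i * \<theta>' i))"
    if th: "\<theta> \<in> \<Theta>" "\<theta>' \<in> \<Theta>" for \<theta> \<theta>'
  proof -
    have nn: "0 \<le> integral\<^sup>L M0 (\<lambda>y. gg \<phi> \<theta> z k y * gg \<phi> \<theta>' z' k' y)"
      using gg_bounds(1)[OF phi b1[OF th(1)[unfolded \<Theta>_def]]] gg_bounds(1)[OF phi b2[OF th(2)[unfolded \<Theta>_def]]]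
      by (intro Bochner_Integration.integral_nonneg mult_nonneg_nonneg) auto
    have "integral\<^sup>L M0 (\<lambda>y. gg \<phi> \<theta> z k y * gg \<phi> \<theta>' z' k' y) = 1 + (\<Sum>i\<in>{1..K}. \<theta> i * \<theta>' i * \<beta> i)"
      unfolding gg_inner Seq[symmetric] mk_def ..
    then have "(integral\<^sup>L M0 (\<lambda>y. gg \<phi> \<theta> z k y * gg \<phi> \<theta>' z' k' y)) ^ n \<le>
        exp (real n * (\<Sum>i\<in>{1..K}. \<theta> i * \<theta>' i * \<beta> i))"
      using nn pow_le_exp by metis
    also have "\<dots> = (\<Prod>i\<in>{1..K}. exp (real n * \<beta> i * \<theta> i * \<theta>' i))"
      by (simp add: sum_distrib_left exp_sum mult_ac)
    finally show ?thesis .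
  qed
  have "(\<Sum>\<theta>\<in>\<Theta>. \<Sum>\<theta>'\<in>\<Theta>. (integral\<^sup>L M0 (\<lambda>y. gg \<phi> \<theta> z k y * gg \<phi> \<theta>' z' k' y)) ^ n) \<le>
        (\<Sum>\<theta>\<in>\<Theta>. \<Sum>\<theta>'\<in>\<Theta>. \<Prod>i\<in>{1..K}. exp (real n * \<beta> i * \<theta> i * \<theta>' i))"
    using step1 by (intro sum_mono) auto
  also have "\<dots> = (\<Prod>i\<in>{1..K}. \<Sum>s\<in>{-1,1}. \<Sum>s'\<in>{-1,1}. exp (real n * \<beta> i * s * s'))"
    unfolding \<Theta>_def by (rule sum_sum_prod_PiE) auto
  also have "\<dots> = (\<Prod>i\<in>{1..K}. 4 * cosh (real n * \<beta> i))"
    by (intro prod.cong refl) (rule sum_signs_exp)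
  also have "\<dots> \<le> (\<Prod>i\<in>{1..K}. 4 * exp ((real n * \<beta> i)\<^sup>2 / 2))"
    by (intro prod_mono conjI mult_left_mono cosh_le_exp_sq) (auto intro: order.trans[OF _ cosh_real_ge_1])
  also have "\<dots> = 4 ^ K * exp (\<Sum>i\<in>{1..K}. (real n * \<beta> i)\<^sup>2 / 2)"
    by (simp add: prod.distrib exp_sum)
  also have "(\<Sum>i\<in>{1..K}. (real n * \<beta> i)\<^sup>2 / 2) = (real n)\<^sup>2 * z\<^sup>2 * z'\<^sup>2 * WW \<phi> mk"
  proof -
    have "(\<Sum>i\<in>{1..K}. (real n * \<beta> i)\<^sup>2 / 2) = (\<Sum>i\<in>{1..mk}. (real n * \<beta> i)\<^sup>2 / 2)"
      by (rule sum.mono_neutral_right) (use mkK in \<open>auto simp: \<beta>_def\<close>)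
    also have "\<dots> = (\<Sum>i\<in>{1..mk}. ((real n)\<^sup>2 * z\<^sup>2 * z'\<^sup>2) * (2 * (1 / (tt \<phi> (int i)) ^ 4)))"
      using tpos by (intro sum.cong refl) (simp add: \<beta>_def power_mult_distrib power_divide field_simps)
    also have "\<dots> = ((real n)\<^sup>2 * z\<^sup>2 * z'\<^sup>2) * (2 * (\<Sum>i\<in>{1..mk}. 1 / (tt \<phi> (int i)) ^ 4))"
      by (simp add: sum_distrib_left)
    also have "\<dots> = (real n)\<^sup>2 * z\<^sup>2 * z'\<^sup>2 * WW \<phi> mk" using WW_pair[OF tpos, of mk] by simp
    finally show ?thesis .
  qed
  finally show ?thesis unfolding \<Theta>_def mk_def .
qed

lemma cconv_meas:
  assumes f: "f \<in> Dens" and phi: "\<phi> \<in> Dens"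
  shows "cconv f \<phi> \<in> borel_measurable M0"
proof -
  have fm[measurable]: "f \<in> borel_measurable M0" using f by (auto simp: Dens_def)
  have pm[measurable]: "\<phi> \<in> borel_measurable M0" using phi by (auto simp: Dens_def)
  interpret sigma_finite_measure M0 by (rule sigma_finite_M0)
  have a: "(\<lambda>p. f (fst p - snd p - of_int \<lfloor>fst p - snd p\<rfloor>)) \<in> borel_measurable (M0 \<Otimes>\<^sub>M M0)"
    by (rule measurable_compose[OF frac_meas fm])
  have b: "(\<lambda>p. \<phi> (snd p)) \<in> borel_measurable (M0 \<Otimes>\<^sub>M M0)"
    by (rule measurable_compose[OF measurable_snd pm])
  have "(\<lambda>p. f (fst p - snd p - of_int \<lfloor>fst p - snd p\<rfloor>) * \<phi> (snd p)) \<in> borel_measurable (M0 \<Otimes>\<^sub>M M0)"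
    using a b by measurable
  then have "case_prod (\<lambda>y s. f (y - s - of_int \<lfloor>y - s\<rfloor>) * \<phi> s) \<in> borel_measurable (M0 \<Otimes>\<^sub>M M0)"
    by (simp add: case_prod_beta')
  then show ?thesis unfolding cconv_def by (rule borel_measurable_lebesgue_integral)
qed

lemma gg_integral: "integral\<^sup>L M0 (gg \<phi> \<theta> z k) = 1"
proof -
  let ?b = "\<lambda>j. of_real (ww \<phi> \<theta> z j) * fc (\<lambda>x. complex_of_real (\<phi> x)) (- j)"
  have "integral\<^sup>L M0 (gg \<phi> \<theta> z k) = integral\<^sup>L M0 (\<lambda>y. 1 + Re (tpc ?b k y))"
    unfolding gg_def ..
  also have "\<dots> = integral\<^sup>L M0 (\<lambda>y. 1) + integral\<^sup>L M0 (\<lambda>y. Re (tpc ?b k y))"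
    by (intro Bochner_Integration.integral_add) (auto intro!: M0_integral_cont continuous_intros)
  also have "integral\<^sup>L M0 (\<lambda>y. Re (tpc ?b k y)) = 0"
    by (subst integral_Re_M0) (auto simp: tpc_integral)
  finally show ?thesis using prob_space.prob_space[OF prob_M0] by (simp add: measure_def)
qed

lemma gg_meas: "gg \<phi> \<theta> z k \<in> borel_measurable M0"
  by (intro meas_M0 borel_measurable_continuous_onI gg_cont)

lemma Pf_fcirc:
  assumes phi: "\<phi> \<in> Dens"
  shows "Pf \<phi> n fcirc = PiM {0..<n} (\<lambda>_. M0)"
proof -
  have "(\<lambda>y. ennreal (cconv fcirc \<phi> y)) = (\<lambda>_. 1)" using cconv_fcirc[OF phi] by auto
  then show ?thesis unfolding Pf_def by (simp add: density_1)
qed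

lemma Pf_ff:
  assumes phi: "\<phi> \<in> Dens" and s: "(\<Sum>j\<in>JJ k. \<bar>ww \<phi> \<theta> z j\<bar>) \<le> 1"
  shows "Pf \<phi> n (ff \<phi> \<theta> z k) =
    density (PiM {0..<n} (\<lambda>_. M0)) (\<lambda>x. ennreal (\<Prod>i\<in>{0..<n}. gg \<phi> \<theta> z k (x i)))"
proof -
  have c: "cconv (ff \<phi> \<theta> z k) \<phi> = gg \<phi> \<theta> z k" using cconv_ff[OF phi] by auto
  have ig: "integrable M0 (gg \<phi> \<theta> z k)" by (rule M0_integral_cont) (rule gg_cont)
  have "(\<integral>\<^sup>+ y. ennreal (gg \<phi> \<theta> z k y) \<partial>M0) = ennreal (integral\<^sup>L M0 (gg \<phi> \<theta> z k))"
    using ig gg_bounds(1)[OF phi s] by (intro nn_integral_eq_integral) auto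
  then have fin: "(\<integral>\<^sup>+ y. ennreal (gg \<phi> \<theta> z k y) \<partial>M0) < \<infinity>" by simp
  have "Pf \<phi> n (ff \<phi> \<theta> z k) = density (PiM {0..<n} (\<lambda>_. M0)) (\<lambda>x. \<Prod>i\<in>{0..<n}. ennreal (gg \<phi> \<theta> z k (x i)))"
    unfolding Pf_def c by (rule PiM_density_eq[OF _ gg_meas fin]) simp
  also have "(\<lambda>x. \<Prod>i\<in>{0..<n}. ennreal (gg \<phi> \<theta> z k (x i))) = (\<lambda>x. ennreal (\<Prod>i\<in>{0..<n}. gg \<phi> \<theta> z k (x i)))"
    using gg_bounds(1)[OF phi s] by (intro ext prod_ennreal) auto
  finally show ?thesis .
qed

lemma Pf_le1:
  assumes f: "f \<in> Dens" and phi: "\<phi> \<in> Dens"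
  shows "measure (Pf \<phi> n f) X \<le> 1"
  unfolding Pf_def
  by (rule PiM_measure_le1[OF _ cconv_meas[OF f phi] cconv_mass[OF f phi]]) simp

lemma risk_le2:
  assumes phi: "\<phi> \<in> Dens"
  shows "risk \<phi> n \<Delta> E r \<le> 2"
proof -
  interpret P: prob_space "PiM {0..<n} (\<lambda>_. M0)" by (intro prob_space_PiM prob_M0)
  have "measure (Pf \<phi> n fcirc) {y \<in> space (Pf \<phi> n fcirc). \<Delta> y = 1} \<le> 1"
    unfolding Pf_fcirc[OF phi] by simp
  moreover have "Sup (insert 0 {measure (Pf \<phi> n f) {y \<in> space (Pf \<phi> n f). \<Delta> y = 0} | f.
            f \<in> Dens \<and> (\<lambda>x. complex_of_real (f x - fcirc x)) \<in> E \<and>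
            l2norm (\<lambda>x. complex_of_real (f x - fcirc x)) \<ge> r}) \<le> 1"
    by (rule cSup_least) (auto intro: Pf_le1[OF _ phi])
  ultimately show ?thesis unfolding risk_def by simp
qed

lemma risk_ge:
  assumes phi: "\<phi> \<in> Dens" and f: "f \<in> Dens"
    and E: "(\<lambda>x. complex_of_real (f x - fcirc x)) \<in> E"
    and r: "l2norm (\<lambda>x. complex_of_real (f x - fcirc x)) \<ge> r"
  shows "risk \<phi> n \<Delta> E r \<ge> measure (Pf \<phi> n fcirc) {y \<in> space (Pf \<phi> n fcirc). \<Delta> y = 1} +
      measure (Pf \<phi> n f) {y \<in> space (Pf \<phi> n f). \<Delta> y = 0}"
proof -
  let ?S = "{measure (Pf \<phi> n f) {y \<in> space (Pf \<phi> n f). \<Delta> y = 0} | f.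
            f \<in> Dens \<and> (\<lambda>x. complex_of_real (f x - fcirc x)) \<in> E \<and>
            l2norm (\<lambda>x. complex_of_real (f x - fcirc x)) \<ge> r}"
  have "measure (Pf \<phi> n f) {y \<in> space (Pf \<phi> n f). \<Delta> y = 0} \<le> Sup (insert 0 ?S)"
  proof (rule cSup_upper)
    show "measure (Pf \<phi> n f) {y \<in> space (Pf \<phi> n f). \<Delta> y = 0} \<in> insert 0 ?S" using f E r by blast
    show "bdd_above (insert 0 ?S)"
      by (rule bdd_aboveI[where M=1]) (auto intro: Pf_le1[OF _ phi])
  qed
  then show ?thesis unfolding risk_def by simp
qed

theorem proposition6p1:
  fixes \<phi> :: "real \<Rightarrow> real" and R \<alpha> \<delta> c L \<eta> A :: real and n N :: nat
    and AA :: "(nat \<Rightarrow> real) set" and aa :: "nat \<Rightarrow> nat \<Rightarrow> real"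
  assumes phi_dens: "\<phi> \<in> Dens"
    and phi_fc: "\<forall>j. cmod (fc (\<lambda>x. complex_of_real (\<phi> x)) j) > 0"
    and R: "R > 0"
    and n: "n \<ge> 1"
    and alpha: "0 < \<alpha>" "\<alpha> < 1"
    and delta: "0 < \<delta>" "\<delta> \<le> 1"
    and AA: "\<forall>a\<in>AA. (\<forall>j\<ge>1. 0 < a j \<and> a j \<le> 1 \<and> a (Suc j) \<le> a j)"
    and aa: "\<forall>m\<in>{1..N}. aa m \<in> AA"
    and C1: "\<forall>m\<in>{1..N}. \<forall>l\<in>{1..N}. m < l \<longrightarrow>
               kk \<phi> (aa m) (\<delta> * real n) \<le> kk \<phi> (aa l) (\<delta> * real n) \<and>
               rho \<phi> (aa m) (\<delta> * real n) \<le> \<delta> * rho \<phi> (aa l) (\<delta> * real n)"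
    and C2: "c > 0" "exp (c * \<delta> powr (-2)) \<le> real N * \<alpha>\<^sup>2"
    and C3: "L > 0"
      "\<forall>m\<in>{1..N}. \<exists>s. ((\<lambda>j. (aa m j)\<^sup>2) has_sum s) {1..} \<and> 2 * s \<le> L"
    and C4: "0 < \<eta>" "\<eta> \<le> 1"
      "\<forall>m\<in>{1..N}. \<eta> \<le>
         min ((aa m (kk \<phi> (aa m) (\<delta> * real n)))\<^sup>2)
             ((nu \<phi> (kk \<phi> (aa m) (\<delta> * real n)))\<^sup>2 / (\<delta> * real n))
       / max ((aa m (kk \<phi> (aa m) (\<delta> * real n)))\<^sup>2)
             ((nu \<phi> (kk \<phi> (aa m) (\<delta> * real n)))\<^sup>2 / (\<delta> * real n))"
    and A: "0 \<le> A"
      "A \<le> sqrt (\<eta> * min (R\<^sup>2) (min (sqrt (ln (1 + \<alpha>\<^sup>2))) (min (1 / L) (sqrt c))))"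
  shows "(INF \<Delta>\<in>tests n. SUP a\<in>AA. risk \<phi> n \<Delta> (ellipsoid a R) (A * rho \<phi> a (\<delta> * real n)))
           \<ge> 1 - \<alpha>"
proof -
  define x where "x = \<delta> * real n"
  have x0: "x > 0" unfolding x_def using delta n by simp
  have tpos: "\<And>j. tt \<phi> j > 0" using phi_fc unfolding tt_def by simp
  define k where "k m = kk \<phi> (aa m) x" for m
  define \<rho> where "\<rho> m = rho \<phi> (aa m) x" for m
  define W where "W m = WW \<phi> (k m)" for m
  define s where "s = min (R\<^sup>2) (min (sqrt (ln (1 + \<alpha>\<^sup>2))) (min (1 / L) (sqrt c)))"
  have k1: "1 \<le> k m" for m unfolding k_def by (rule rho_attained(1)[OF phi_dens tpos x0])
  have rho0: "0 \<le> \<rho> m" for m unfolding \<rho>_def by (rule rho_attained(3)[OF phi_dens tpos x0])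
  have mx: "max ((aa m (k m))\<^sup>2) ((nu \<phi> (k m))\<^sup>2 / x) = (\<rho> m)\<^sup>2" for m
    unfolding k_def \<rho>_def by (rule rho_attained(2)[OF phi_dens tpos x0])
  have Wpos: "W m > 0" for m using WW_ge[OF phi_dens tpos, of "k m"] k1[of m] unfolding W_def by simp
  have nuW: "(nu \<phi> (k m))\<^sup>2 = sqrt (W m)" for m unfolding W_def using Wpos[of m] unfolding W_def
    by (intro nu_sq) simp
  have ln0: "0 < ln (1 + \<alpha>\<^sup>2)" using alpha by (intro ln_gt_zero) simp
  have s0: "0 < s" unfolding s_def using R alpha C2(1) C3(1) ln0 by auto
  have As: "A\<^sup>2 \<le> \<eta> * s"
  proof -
    have "A\<^sup>2 \<le> (sqrt (\<eta> * s))\<^sup>2" using A unfolding s_def by (intro power_mono) auto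
    then show ?thesis using C4(1) s0 by simp
  qed
  have KI: "A\<^sup>2 * (\<rho> m)\<^sup>2 \<le> s * min ((aa m (k m))\<^sup>2) ((nu \<phi> (k m))\<^sup>2 / x)" if m: "m \<in> {1..N}" for m
  proof -
    let ?mn = "min ((aa m (k m))\<^sup>2) ((nu \<phi> (k m))\<^sup>2 / x)"
    have eta: "\<eta> \<le> ?mn / (\<rho> m)\<^sup>2"
      using C4(3) m unfolding k_def[symmetric] x_def[symmetric] mx by auto
    have "0 < (nu \<phi> (k m))\<^sup>2 / x" using nuW[of m] Wpos[of m] x0 by simp
    then have r2: "0 < (\<rho> m)\<^sup>2" unfolding mx[symmetric] by (simp add: less_max_iff_disj)
    have "\<eta> * (\<rho> m)\<^sup>2 \<le> ?mn" using eta r2 by (simp add: le_divide_eq)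
    have "A\<^sup>2 * (\<rho> m)\<^sup>2 \<le> (\<eta> * s) * (\<rho> m)\<^sup>2" using As by (intro mult_right_mono) auto
    also have "\<dots> = s * (\<eta> * (\<rho> m)\<^sup>2)" by simp
    also have "\<dots> \<le> s * ?mn" using \<open>\<eta> * (\<rho> m)\<^sup>2 \<le> ?mn\<close> s0 by (intro mult_left_mono) auto
    finally show ?thesis .
  qed
  have KIa: "A\<^sup>2 * (\<rho> m)\<^sup>2 \<le> s * (aa m (k m))\<^sup>2" if m: "m \<in> {1..N}" for m
    using KI[OF m] s0 by (smt (verit) min.cobounded1 mult_left_mono)
  have KIb: "A\<^sup>2 * (\<rho> m)\<^sup>2 \<le> s * (sqrt (W m) / x)" if m: "m \<in> {1..N}" for m
    using KI[OF m] s0 nuW[of m] by (smt (verit) min.cobounded2 mult_left_mono)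
  define \<zeta> where "\<zeta> m = A * \<rho> m / sqrt (W m)" for m
  have N1: "N \<ge> 1"
  proof (rule ccontr)
    assume "\<not> N \<ge> 1"
    then have "N = 0" by simp
    then show False using C2(2) by (simp add: not_le)
  qed
  define K where "K = Max (k ` {1..N})"
  have kK: "k m \<le> K" if "m \<in> {1..N}" for m unfolding K_def using that by (intro Max_ge) auto
  define \<Theta> where "\<Theta> = Pi\<^sub>E {1..K} (\<lambda>_. {-1, 1::real})"
  have \<Theta>fin: "finite \<Theta>" unfolding \<Theta>_def by (intro finite_PiE) auto
  have \<Theta>card: "card \<Theta> = 2 ^ K" unfolding \<Theta>_def by (simp add: card_PiE numeral_2_eq_2)
  have PF: "(\<Sum>j\<in>JJ (k m). \<bar>ww \<phi> \<theta> (\<zeta> m) j\<bar>) \<le> 1 \<and> hh \<phi> \<theta> (\<zeta> m) (k m) \<in> ellipsoid (aa m) R \<and>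
      l2norm (hh \<phi> \<theta> (\<zeta> m) (k m)) = A * \<rho> m"
    if m: "m \<in> {1..N}" and th: "\<theta> \<in> \<Theta>" for m \<theta>
  proof -
    have am: "\<forall>j\<ge>1. 0 < aa m j \<and> aa m (Suc j) \<le> aa m j" using AA aa m by blast
    obtain s' where s': "((\<lambda>j. (aa m j)\<^sup>2) has_sum s') {1..}" "2 * s' \<le> L" using C3(2) m by blast
    have thk: "\<forall>i\<in>{1..k m}. \<theta> i \<in> {-1, 1}" using th kK[OF m] unfolding \<Theta>_def by auto
    have "s \<le> 1 / L" "s \<le> R\<^sup>2" unfolding s_def by auto
    from pert_facts[OF phi_dens tpos k1 am s' C3(1) KIa[OF m] this s0[THEN less_imp_le] A(1) rho0 thk
        \<zeta>_def[unfolded W_def]]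
    show ?thesis unfolding W_def by blast
  qed
  define u where "u m = A\<^sup>2 * (\<rho> m)\<^sup>2" for m
  have u0: "0 \<le> u m" for m unfolding u_def by simp
  have zeta2: "(\<zeta> m)\<^sup>2 = u m / W m" for m
    unfolding \<zeta>_def u_def using Wpos[of m] by (simp add: power_divide power_mult_distrib)
  have ub: "(u m)\<^sup>2 \<le> s\<^sup>2 * W m / x\<^sup>2" if m: "m \<in> {1..N}" for m
  proof -
    have "(u m)\<^sup>2 \<le> (s * (sqrt (W m) / x))\<^sup>2" using KIb[OF m] u0[of m] unfolding u_def by (intro power_mono) auto
    also have "\<dots> = s\<^sup>2 * W m / x\<^sup>2" using Wpos[of m] by (simp add: power_mult_distrib power_divide)
    finally show ?thesis .
  qed
  have sc: "s\<^sup>2 \<le> c"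
  proof -
    have "s \<le> sqrt c" unfolding s_def by auto
    then have "s\<^sup>2 \<le> (sqrt c)\<^sup>2" using s0 by (intro power_mono) auto
    then show ?thesis using C2(1) by simp
  qed
  have sl: "s\<^sup>2 \<le> ln (1 + \<alpha>\<^sup>2)"
  proof -
    have "s \<le> sqrt (ln (1 + \<alpha>\<^sup>2))" unfolding s_def by auto
    then have "s\<^sup>2 \<le> (sqrt (ln (1 + \<alpha>\<^sup>2)))\<^sup>2" using s0 by (intro power_mono) auto
    then show ?thesis using ln0 by simp
  qed
  define E where "E m m' = (real n)\<^sup>2 * (\<zeta> m)\<^sup>2 * (\<zeta> m')\<^sup>2 * WW \<phi> (min (k m) (k m'))" for m m'
  have Ediag: "exp (E m m) \<le> real N * \<alpha>\<^sup>2" if m: "m \<in> {1..N}" for m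
  proof -
    have "E m m = (real n)\<^sup>2 * (u m)\<^sup>2 / W m"
      unfolding E_def zeta2 using Wpos[of m] unfolding W_def by (simp add: power2_eq_square field_simps)
    also have "\<dots> \<le> (real n)\<^sup>2 * (s\<^sup>2 * W m / x\<^sup>2) / W m"
      using ub[OF m] Wpos[of m] by (intro divide_right_mono mult_left_mono) auto
    also have "\<dots> = s\<^sup>2 / \<delta>\<^sup>2" unfolding x_def using Wpos[of m] n delta by (simp add: power_mult_distrib)
    also have "\<dots> \<le> c / \<delta>\<^sup>2" using sc delta by (intro divide_right_mono) auto
    also have "\<dots> = c * \<delta> powr (-2)" using delta by (simp add: powr_minus powr_realpow divide_inverse)
    finally have "exp (E m m) \<le> exp (c * \<delta> powr (-2))" by simp
    then show ?thesis by (rule order.trans[OF _ C2(2)])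
  qed
  have Eoff: "exp (E m m') \<le> 1 + \<alpha>\<^sup>2" if m: "m \<in> {1..N}" "m' \<in> {1..N}" "m < m'" for m m'
  proof -
    have kmm: "k m \<le> k m'" and rmm: "\<rho> m \<le> \<delta> * \<rho> m'"
      using C1 m unfolding k_def[symmetric] \<rho>_def[symmetric] x_def[symmetric] by auto
    have umm: "u m \<le> \<delta>\<^sup>2 * u m'"
    proof -
      have "(\<rho> m)\<^sup>2 \<le> (\<delta> * \<rho> m')\<^sup>2" using rmm rho0[of m] by (intro power_mono) auto
      then have "A\<^sup>2 * (\<rho> m)\<^sup>2 \<le> A\<^sup>2 * (\<delta>\<^sup>2 * (\<rho> m')\<^sup>2)"
        by (intro mult_left_mono) (auto simp: power_mult_distrib)
      then show ?thesis unfolding u_def by (simp add: mult_ac)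
    qed
    have "E m m' = (real n)\<^sup>2 * u m * u m' / W m'"
      unfolding E_def zeta2 using kmm Wpos[of m] Wpos[of m'] unfolding W_def by (simp add: min_absorb1)
    also have "\<dots> \<le> (real n)\<^sup>2 * (\<delta>\<^sup>2 * u m') * u m' / W m'"
      using umm u0[of m'] Wpos[of m'] by (intro divide_right_mono mult_right_mono mult_left_mono) auto
    also have "\<dots> = (real n)\<^sup>2 * \<delta>\<^sup>2 * (u m')\<^sup>2 / W m'" by (simp add: power2_eq_square)
    also have "\<dots> \<le> (real n)\<^sup>2 * \<delta>\<^sup>2 * (s\<^sup>2 * W m' / x\<^sup>2) / W m'"
      using ub[OF m(2)] Wpos[of m'] by (intro divide_right_mono mult_left_mono) auto
    also have "\<dots> = s\<^sup>2" unfolding x_def using Wpos[of m'] n delta by (simp add: power_mult_distrib)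
    also have "\<dots> \<le> ln (1 + \<alpha>\<^sup>2)" by (rule sl)
    finally have "exp (E m m') \<le> exp (ln (1 + \<alpha>\<^sup>2))" by simp
    also have "exp (ln (1 + \<alpha>\<^sup>2)) = 1 + \<alpha>\<^sup>2" using alpha by (simp add: add_pos_nonneg)
    finally show ?thesis .
  qed
  have Esym: "E m m' = E m' m" for m m' unfolding E_def by (simp add: min.commute mult_ac)
  have Ebound: "exp (E m m') \<le> (if m = m' then real N * \<alpha>\<^sup>2 else 0) + (1 + \<alpha>\<^sup>2)"
    if m: "m \<in> {1..N}" "m' \<in> {1..N}" for m m'
  proof (cases "m = m'")
    case True
    have h: "exp (E m m') \<le> real N * \<alpha>\<^sup>2" using Ediag[OF m(1)] True by simp
    have "0 \<le> \<alpha>\<^sup>2" by simp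
    then have "real N * \<alpha>\<^sup>2 \<le> real N * \<alpha>\<^sup>2 + (1 + \<alpha>\<^sup>2)" by linarith
    then show ?thesis unfolding if_P[OF True] by (rule order.trans[OF h])
  next
    case False
    then consider "m < m'" | "m' < m" by linarith
    then show ?thesis
    proof cases
      case 1 then show ?thesis using Eoff[OF m] False by simp
    next
      case 2 then show ?thesis using Eoff[OF m(2) m(1)] Esym[of m m'] False by simp
    qed
  qed
  define Q where "Q = {1..N} \<times> \<Theta>"
  define g where "g q = gg \<phi> (snd q) (\<zeta> (fst q)) (k (fst q))" for q
  have Qfin: "finite Q" unfolding Q_def using \<Theta>fin by simp
  have Qne: "Q \<noteq> {}"
  proof -
    have "(\<lambda>i. if i \<in> {1..K} then 1 else undefined) \<in> \<Theta>" unfolding \<Theta>_def by auto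
    then show ?thesis unfolding Q_def using N1 by auto
  qed
  have Qcard: "real (card Q) = real N * 2 ^ K" unfolding Q_def by (simp add: card_cartesian_product \<Theta>card)
  have cp: "(\<Sum>q\<in>Q. h q) = (\<Sum>m\<in>{1..N}. \<Sum>\<theta>\<in>\<Theta>. h (m, \<theta>))" for h :: "nat \<times> (nat \<Rightarrow> real) \<Rightarrow> real"
    unfolding Q_def by (simp add: sum.cartesian_product)
  have chi: "(\<Sum>q\<in>Q. \<Sum>q'\<in>Q. (integral\<^sup>L M0 (\<lambda>y. g q y * g q' y)) ^ n) \<le> (1 + 2 * \<alpha>\<^sup>2) * (real (card Q))\<^sup>2"
  proof -
    let ?F = "\<lambda>m \<theta> m' \<theta>'. (integral\<^sup>L M0 (\<lambda>y. gg \<phi> \<theta> (\<zeta> m) (k m) y * gg \<phi> \<theta>' (\<zeta> m') (k m') y)) ^ n"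
    have "(\<Sum>q\<in>Q. \<Sum>q'\<in>Q. (integral\<^sup>L M0 (\<lambda>y. g q y * g q' y)) ^ n) =
        (\<Sum>m\<in>{1..N}. \<Sum>\<theta>\<in>\<Theta>. \<Sum>m'\<in>{1..N}. \<Sum>\<theta>'\<in>\<Theta>. ?F m \<theta> m' \<theta>')"
      unfolding cp g_def by simp
    also have "\<dots> = (\<Sum>m\<in>{1..N}. \<Sum>m'\<in>{1..N}. \<Sum>\<theta>\<in>\<Theta>. \<Sum>\<theta>'\<in>\<Theta>. ?F m \<theta> m' \<theta>')"
      by (intro sum.cong refl) (rule sum.swap)
    also have "\<dots> \<le> (\<Sum>m\<in>{1..N}. \<Sum>m'\<in>{1..N}. 4 ^ K * ((if m = m' then real N * \<alpha>\<^sup>2 else 0) + (1 + \<alpha>\<^sup>2)))"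
    proof (intro sum_mono)
      fix m m' assume m: "m \<in> {1..N}" "m' \<in> {1..N}"
      have "(\<Sum>\<theta>\<in>\<Theta>. \<Sum>\<theta>'\<in>\<Theta>. ?F m \<theta> m' \<theta>') \<le> 4 ^ K * exp (E m m')"
        unfolding \<Theta>_def E_def
        by (rule chi_pair[OF phi_dens tpos kK[OF m(1)] kK[OF m(2)]]) (use PF m in \<open>auto simp: \<Theta>_def\<close>)
      also have "\<dots> \<le> 4 ^ K * ((if m = m' then real N * \<alpha>\<^sup>2 else 0) + (1 + \<alpha>\<^sup>2))"
        by (intro mult_left_mono Ebound[OF m]) auto
      finally show "(\<Sum>\<theta>\<in>\<Theta>. \<Sum>\<theta>'\<in>\<Theta>. ?F m \<theta> m' \<theta>') \<le> 4 ^ K * ((if m = m' then real N * \<alpha>\<^sup>2 else 0) + (1 + \<alpha>\<^sup>2))" .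
    qed
    also have "\<dots> = (\<Sum>m\<in>{1..N}. 4 ^ K * (real N * \<alpha>\<^sup>2 + real N * (1 + \<alpha>\<^sup>2)))"
    proof (intro sum.cong refl)
      fix m assume m: "m \<in> {1..N}"
      have "(\<Sum>m'\<in>{1..N}. (if m = m' then real N * \<alpha>\<^sup>2 else 0) + (1 + \<alpha>\<^sup>2)) =
            (\<Sum>m'\<in>{1..N}. (if m = m' then real N * \<alpha>\<^sup>2 else 0)) + real N * (1 + \<alpha>\<^sup>2)"
        by (simp add: sum.distrib)
      also have "(\<Sum>m'\<in>{1..N}. (if m = m' then real N * \<alpha>\<^sup>2 else 0)) = real N * \<alpha>\<^sup>2"
        using m by (simp add: sum.delta)
      finally show "(\<Sum>m'\<in>{1..N}. 4 ^ K * ((if m = m' then real N * \<alpha>\<^sup>2 else 0) + (1 + \<alpha>\<^sup>2))) =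
          4 ^ K * (real N * \<alpha>\<^sup>2 + real N * (1 + \<alpha>\<^sup>2))"
        by (simp add: sum_distrib_left[symmetric])
    qed
    also have "\<dots> = (1 + 2 * \<alpha>\<^sup>2) * (real (card Q))\<^sup>2"
    proof -
      have f: "(4::real) ^ K = 2 ^ K * 2 ^ K" by (simp add: power_mult_distrib[symmetric])
      show ?thesis unfolding Qcard f by (simp add: algebra_simps power2_eq_square)
    qed
    finally show ?thesis .
  qed
  define P0 where "P0 = PiM {0..<n} (\<lambda>_. M0)"
  interpret P: prob_space P0 unfolding P0_def by (intro prob_space_PiM prob_M0)
  define M where "M q = measure (density P0 (\<lambda>x. ennreal (\<Prod>i\<in>{0..<n}. g q (x i))))" for q
  have PFq: "(\<Sum>j\<in>JJ (k (fst q)). \<bar>ww \<phi> (snd q) (\<zeta> (fst q)) j\<bar>) \<le> 1" if "q \<in> Q" for q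
    using PF that unfolding Q_def by auto
  have bdd: "bdd_above ((\<lambda>a. risk \<phi> n \<Delta> (ellipsoid a R) (A * rho \<phi> a (\<delta> * real n))) ` AA)" for \<Delta>
    by (rule bdd_aboveI[where M=2]) (auto intro: risk_le2[OF phi_dens])
  have main: "1 - \<alpha> \<le> (SUP a\<in>AA. risk \<phi> n \<Delta> (ellipsoid a R) (A * rho \<phi> a (\<delta> * real n)))"
    if D: "\<Delta> \<in> tests n" for \<Delta>
  proof -
    define B where "B = {y \<in> space P0. \<Delta> y = 1}"
    have Dm: "\<Delta> \<in> measurable P0 (count_space UNIV)" using D unfolding tests_def P0_def by simp
    have D01: "\<Delta> y \<in> {0, 1}" for y using D unfolding tests_def by simp
    have Bs: "B \<in> sets P0"
    proof -
      have "\<Delta> -` {1} \<inter> space P0 \<in> sets P0" by (rule measurable_sets[OF Dm]) simp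
      moreover have "\<Delta> -` {1} \<inter> space P0 = B" unfolding B_def by auto
      ultimately show ?thesis by simp
    qed
    have LC: "measure P0 B + (\<Sum>q\<in>Q. M q (space P0 - B)) / real (card Q) \<ge> 1 - \<alpha>"
      unfolding M_def P0_def
    proof (rule lecam[OF Qfin Qne])
      show "\<And>q. q \<in> Q \<Longrightarrow> g q \<in> borel_measurable M0" unfolding g_def by (rule gg_meas)
      show "\<And>q y. q \<in> Q \<Longrightarrow> 0 \<le> g q y \<and> g q y \<le> 2"
        unfolding g_def using gg_bounds[OF phi_dens PFq] by blast
      show "\<And>q. q \<in> Q \<Longrightarrow> integral\<^sup>L M0 (g q) = 1" unfolding g_def by (rule gg_integral)
      show "B \<in> sets (Pi\<^sub>M {0..<n} (\<lambda>_. M0))" using Bs unfolding P0_def .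
    qed (use chi alpha in auto)
    have rq: "risk \<phi> n \<Delta> (ellipsoid (aa m) R) (A * \<rho> m) \<ge> measure P0 B + M (m, \<theta>) (space P0 - B)"
      if m: "m \<in> {1..N}" and th: "\<theta> \<in> \<Theta>" for m \<theta>
    proof -
      have q: "(m, \<theta>) \<in> Q" unfolding Q_def using m th by simp
      have pf: "(\<Sum>j\<in>JJ (k m). \<bar>ww \<phi> \<theta> (\<zeta> m) j\<bar>) \<le> 1" "hh \<phi> \<theta> (\<zeta> m) (k m) \<in> ellipsoid (aa m) R"
        "l2norm (hh \<phi> \<theta> (\<zeta> m) (k m)) = A * \<rho> m" using PF[OF m th] by auto
      have hh_eq': "(\<lambda>x. complex_of_real (ff \<phi> \<theta> (\<zeta> m) (k m) x - fcirc x)) = hh \<phi> \<theta> (\<zeta> m) (k m)"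
        by (rule ext) (simp add: hh_def)
      have "risk \<phi> n \<Delta> (ellipsoid (aa m) R) (A * \<rho> m) \<ge>
        measure (Pf \<phi> n fcirc) {y \<in> space (Pf \<phi> n fcirc). \<Delta> y = 1} +
        measure (Pf \<phi> n (ff \<phi> \<theta> (\<zeta> m) (k m))) {y \<in> space (Pf \<phi> n (ff \<phi> \<theta> (\<zeta> m) (k m))). \<Delta> y = 0}"
        using risk_ge[OF phi_dens ff_Dens[OF pf(1)], of "ellipsoid (aa m) R" "A * \<rho> m" n \<Delta>] pf
        unfolding hh_eq' by simp
      also have "measure (Pf \<phi> n fcirc) {y \<in> space (Pf \<phi> n fcirc). \<Delta> y = 1} = measure P0 B"
        unfolding Pf_fcirc[OF phi_dens] B_def P0_def ..
      also have "measure (Pf \<phi> n (ff \<phi> \<theta> (\<zeta> m) (k m))) {y \<in> space (Pf \<phi> n (ff \<phi> \<theta> (\<zeta> m) (k m))). \<Delta> y = 0}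
          = M (m, \<theta>) (space P0 - B)"
      proof -
        have "{y \<in> space P0. \<Delta> y = 0} = space P0 - B" unfolding B_def using D01 by auto
        then show ?thesis unfolding Pf_ff[OF phi_dens pf(1)] M_def g_def P0_def[symmetric] by simp
      qed
      finally show ?thesis .
    qed
    have rm: "risk \<phi> n \<Delta> (ellipsoid (aa m) R) (A * \<rho> m) \<ge>
        measure P0 B + (\<Sum>\<theta>\<in>\<Theta>. M (m, \<theta>) (space P0 - B)) / real (card \<Theta>)" if m: "m \<in> {1..N}" for m
    proof -
      have cT: "real (card \<Theta>) > 0" unfolding \<Theta>card by simp
      have "(\<Sum>\<theta>\<in>\<Theta>. measure P0 B + M (m, \<theta>) (space P0 - B)) \<le> (\<Sum>\<theta>\<in>\<Theta>. risk \<phi> n \<Delta> (ellipsoid (aa m) R) (A * \<rho> m))"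
        using rq[OF m] by (intro sum_mono) auto
      then have "real (card \<Theta>) * measure P0 B + (\<Sum>\<theta>\<in>\<Theta>. M (m, \<theta>) (space P0 - B)) \<le>
          real (card \<Theta>) * risk \<phi> n \<Delta> (ellipsoid (aa m) R) (A * \<rho> m)"
        by (simp add: sum.distrib)
      then show ?thesis using cT by (simp add: field_simps)
    qed
    have sup_ge: "risk \<phi> n \<Delta> (ellipsoid (aa m) R) (A * \<rho> m) \<le>
        (SUP a\<in>AA. risk \<phi> n \<Delta> (ellipsoid a R) (A * rho \<phi> a (\<delta> * real n)))" if m: "m \<in> {1..N}" for m
    proof -
      have "risk \<phi> n \<Delta> (ellipsoid (aa m) R) (A * \<rho> m) =
          (\<lambda>a. risk \<phi> n \<Delta> (ellipsoid a R) (A * rho \<phi> a (\<delta> * real n))) (aa m)"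
        unfolding \<rho>_def x_def ..
      also have "\<dots> \<le> (SUP a\<in>AA. risk \<phi> n \<Delta> (ellipsoid a R) (A * rho \<phi> a (\<delta> * real n)))"
        by (rule cSUP_upper[OF _ bdd]) (use aa m in auto)
      finally show ?thesis .
    qed
    let ?S = "(SUP a\<in>AA. risk \<phi> n \<Delta> (ellipsoid a R) (A * rho \<phi> a (\<delta> * real n)))"
    have "1 - \<alpha> \<le> measure P0 B + (\<Sum>q\<in>Q. M q (space P0 - B)) / real (card Q)" by (rule LC)
    also have "\<dots> = (\<Sum>m\<in>{1..N}. measure P0 B + (\<Sum>\<theta>\<in>\<Theta>. M (m, \<theta>) (space P0 - B)) / real (card \<Theta>)) / real N"
    proof -
      have "(\<Sum>q\<in>Q. M q (space P0 - B)) = (\<Sum>m\<in>{1..N}. \<Sum>\<theta>\<in>\<Theta>. M (m, \<theta>) (space P0 - B))"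
        by (rule cp)
      moreover have "real (card Q) = real N * real (card \<Theta>)" unfolding Qcard \<Theta>card by simp
      moreover have "real N > 0" using N1 by simp
      moreover have "real (card \<Theta>) > 0" unfolding \<Theta>card by simp
      ultimately show ?thesis by (simp add: sum.distrib sum_divide_distrib[symmetric] field_simps)
    qed
    also have "\<dots> \<le> (\<Sum>m\<in>{1..N}. ?S) / real N"
      using N1 rm sup_ge by (intro divide_right_mono sum_mono) (auto intro: order.trans)
    also have "\<dots> = ?S" using N1 by simp
    finally show ?thesis .
  qed
  have tne: "tests n \<noteq> {}"
  proof -
    have "(\<lambda>_. 0) \<in> tests n" unfolding tests_def by simp
    then show ?thesis by blast
  qed
  show ?thesis by (rule cINF_greatest[OF tne main])
qed

end
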